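(* Let $T_0\subset\mathbb{R}^n$ be a bounded open set with finite perimeter $P(T_0)<\infty$, let $\lambda>1$ and $a,b\in\mathbb{N}$, and for $k\in\mathbb{N}$, $1\leq i\leq ab^{k-1}$ let $F_k^i(x):=\mathcal R_k^i(\lambda^{-k}x)+x_k^i$ with $\mathcal R_k^i\in SO(n)$, $x_k^i\in\mathbb{R}^n$. Set $T_k^i:=F_k^i(T_0)$ and assume $|T_k^i\cap T_h^j|=0$ whenever $(k,i)\neq(h,j)$. Let \[ T:=\bigcup_{k=1}^\infty\bigcup_{i=1}^{ab^{k-1}}T_k^i. \] Assume $\frac{\log b}{\log\lambda}\in(n-1,n)$ and that there exists $S_0\subset\mathbb{R}^n\setminus T$ with $|S_0|>0$ and $F_k^i(S_0)\subset\mathbb{R}^n\setminus T$ for all $k,i$. Then \[ P_s(T)<\infty\quad\forall\,s\in\Big(0,n-\frac{\log b}{\log\lambda}\Big),\qquad P_s(T)=\infty\quad\forall\,s\in\Big[n-\frac{\log b}{\log\lambda},1\Big). \] Thus $\mathrm{Dim}_F(\partial^-T)=\frac{\log b}{\log\lambda}$.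
   Context: $P(T_0)=|D\chi_{T_0}|(\mathbb{R}^n)$ is the classical perimeter. For $s\in(0,1)$, $P_s(E):=\int_E\int_{\mathbb{R}^n\setminus E}|x-y|^{-n-s}dx\,dy$. $\partial^-E:=\{x: 0<|E\cap B_r(x)|<\omega_nr^n\ \forall r>0\}$, and $\mathrm{Dim}_F(\partial^-E):=n-\sup\{s\in(0,1):P_s(E)<\infty\}$. *)

theory Defs
  imports "HOL-Analysis.Analysis"
begin

definition admissible_field :: "('a::euclidean_space \<Rightarrow> 'a) \<Rightarrow> bool" where
  "admissible_field \<phi> \<longleftrightarrow>
     (\<forall>x. \<phi> differentiable (at x)) \<and>
     (\<forall>i\<in>Basis. continuous_on UNIV (\<lambda>x. frechet_derivative \<phi> (at x) i)) \<and>
     compact (closure {x. \<phi> x \<noteq> 0}) \<and>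
     (\<forall>x. norm (\<phi> x) \<le> 1)"

definition divergence :: "('a::euclidean_space \<Rightarrow> 'a) \<Rightarrow> 'a \<Rightarrow> real" where
  "divergence \<phi> x = (\<Sum>i\<in>Basis. frechet_derivative \<phi> (at x) i \<bullet> i)"

text \<open>Classical (De Giorgi) perimeter: total variation of the distributional gradient
of the characteristic function, |D chi_E|(R^n).\<close>
definition perimeter :: "'a::euclidean_space set \<Rightarrow> ereal" where
  "perimeter E = (SUP \<phi> \<in> {\<phi>. admissible_field \<phi>}.
                    ereal (LINT x:E|lborel. divergence \<phi> x))"

definition frac_perimeter :: "real \<Rightarrow> 'a::euclidean_space set \<Rightarrow> ennreal" where
  "frac_perimeter s E =
     (\<integral>\<^sup>+ x. indicator E x *
        (\<integral>\<^sup>+ y. indicator (- E) y * ennreal (dist x y powr (- (real DIM('a) + s))) \<partial>lborel)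
      \<partial>lborel)"

text \<open>Fractal dimension of the measure theoretic boundary of E:
Dim_F(boundary^- E) = n - sup {s in (0,1). P_s(E) < infinity}.\<close>
definition frac_dim :: "'a::euclidean_space set \<Rightarrow> real" where
  "frac_dim E = real DIM('a) - Sup {s. 0 < s \<and> s < 1 \<and> frac_perimeter s E < \<infinity>}"

end

theory Submission
  imports Defs
begin


lemma emeasure_isometry_open:
  fixes g :: "'a::euclidean_space \<Rightarrow> 'a"
  assumes lin: "linear g" and iso: "\<And>x. norm (g x) = norm x"
    and linh: "linear h" and hg: "\<And>x. h (g x) = x" and gh: "\<And>x. g (h x) = x"
    and U: "open U"
  shows "emeasure lborel (g ` U) = emeasure lborel U"
proof -
  let ?K = "{(c::'a, r::real). r > 0 \<and> ball c r \<subseteq> U}"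
  obtain C where C: "countable C" "C \<subseteq> ?K"
     and pw: "pairwise (\<lambda>i j. disjnt (ball (fst i) (snd i)) (ball (fst j) (snd j))) C"
     and neg: "negligible(U - (\<Union>i \<in> C. ball (fst i) (snd i)))"
  proof (rule Vitali_covering_theorem_balls[of U ?K fst snd])
    fix x d assume "x \<in> U" "(0::real) < d"
    then obtain e where e: "e > 0" "ball x e \<subseteq> U" using U open_contains_ball by blast
    show "\<exists>i. i \<in> ?K \<and> x \<in> ball (fst i) (snd i) \<and> snd i < d"
      by (rule exI[of _ "(x, min e (d/2))"]) (use e \<open>0<d\<close> in auto)
  qed
  define X :: "'a \<times> real \<Rightarrow> 'a set" where "X i = ball (fst i) (snd i)" for i
  define B where "B = (\<Union>i \<in> C. X i)"
  define N where "N = U - B"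
  have BU: "B \<subseteq> U" using C(2) unfolding B_def X_def by fastforce
  have UBN: "U = B \<union> N" using BU by (auto simp: N_def)
  have dist_g: "dist (g x) (g y) = dist x y" for x y
    by (metis dist_norm iso lin linear_diff)
  have gball: "g ` ball c r = ball (g c) r" for c r
  proof
    show "g ` ball c r \<subseteq> ball (g c) r" using dist_g by auto
    show "ball (g c) r \<subseteq> g ` ball c r"
    proof
      fix y assume y: "y \<in> ball (g c) r"
      have "y = g (h y)" by (simp add: gh)
      with y dist_g show "y \<in> g ` ball c r" by (metis image_eqI mem_ball)
    qed
  qed
  have inj: "inj g" by (metis hg injI)
  have Bm: "B \<in> sets borel" unfolding B_def X_def using C(1) by (intro sets.countable_UN'') auto
  have Nm: "N \<in> sets borel" unfolding N_def using Bm U by auto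
  have Nnull: "N \<in> null_sets lborel"
    using neg Nm by (simp add: N_def B_def X_def negligible_iff_null_sets null_sets_completion_iff)
  have gN: "negligible (g ` N)"
    by (rule negligible_differentiable_image_negligible)
       (use neg lin in \<open>auto simp: N_def B_def X_def linear_imp_differentiable_on\<close>)
  have gUeq: "g ` U = h -` U"
  proof
    show "g ` U \<subseteq> h -` U" using hg by auto
    show "h -` U \<subseteq> g ` U" using gh by (metis image_eqI subsetI vimageE)
  qed
  have gU: "open (g ` U)" unfolding gUeq
    using linh U by (intro open_vimage) (auto intro!: linear_continuous_on simp: linear_linear)
  have gBeq: "g ` B = (\<Union>i \<in> C. ball (g (fst i)) (snd i))"
    unfolding B_def X_def image_UN gball ..
  have gBm: "g ` B \<in> sets borel" unfolding gBeq using C(1) by (intro sets.countable_UN'') auto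
  have gNeq: "g ` N = g ` U - g ` B" unfolding N_def using inj by (simp add: image_set_diff)
  have gNm: "g ` N \<in> sets borel" unfolding gNeq using gU gBm by auto
  have gNnull: "g ` N \<in> null_sets lborel"
    using gN gNm by (simp add: negligible_iff_null_sets null_sets_completion_iff)
  have disjX: "disjoint_family_on X C"
    using pw unfolding disjoint_family_on_def pairwise_def disjnt_def X_def by blast
  have disjY: "disjoint_family_on (\<lambda>i. ball (g (fst i)) (snd i)) C"
    using disjX inj unfolding disjoint_family_on_def X_def gball[symmetric]
    by (metis image_empty image_Int)
  have rpos: "i \<in> C \<Longrightarrow> snd i > 0" for i using C(2) by auto
  have "emeasure lborel (g ` U) = emeasure lborel (g ` B \<union> g ` N)"
    using UBN by (metis image_Un)
  also have "\<dots> = emeasure lborel (g ` B)" using gBm gNnull by (simp add: emeasure_Un_null_set)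
  also have "\<dots> = (\<integral>\<^sup>+i. emeasure lborel (ball (g (fst i)) (snd i)) \<partial>count_space C)"
    unfolding gBeq using C(1) disjY by (intro emeasure_UN_countable) auto
  also have "\<dots> = (\<integral>\<^sup>+i. emeasure lborel (X i) \<partial>count_space C)"
    by (intro nn_integral_cong) (simp add: X_def emeasure_ball less_imp_le rpos)
  also have "\<dots> = emeasure lborel B"
    unfolding B_def using C(1) disjX by (intro emeasure_UN_countable[symmetric]) (auto simp: X_def[abs_def])
  also have "\<dots> = emeasure lborel U" using UBN Bm Nnull by (simp add: emeasure_Un_null_set)
  finally show ?thesis .
qed


lemma distr_isometry:
  fixes g :: "'a::euclidean_space \<Rightarrow> 'a"
  assumes lin: "linear g" and iso: "\<And>x. norm (g x) = norm x"
    and linh: "linear h" and hg: "\<And>x. h (g x) = x" and gh: "\<And>x. g (h x) = x"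
  shows "distr lborel borel g = lborel"
proof (rule lborel_eqI[symmetric])
  fix l u :: 'a assume le: "\<And>b. b \<in> Basis \<Longrightarrow> l \<bullet> b \<le> u \<bullet> b"
  have gm: "g \<in> borel_measurable borel"
    using lin by (intro borel_measurable_continuous_onI linear_continuous_on) (simp add: linear_linear)
  have isoh: "norm (h x) = norm x" for x by (metis gh iso)
  have eq: "g -` box l u = h ` box l u"
  proof
    show "g -` box l u \<subseteq> h ` box l u" using hg by (metis image_eqI subsetI vimageE)
    show "h ` box l u \<subseteq> g -` box l u" using gh by auto
  qed
  have "emeasure (distr lborel borel g) (box l u) = emeasure lborel (g -` box l u)"
    using gm by (subst emeasure_distr) auto
  also have "\<dots> = emeasure lborel (box l u)"
    unfolding eq by (rule emeasure_isometry_open[OF linh isoh lin gh hg]) (simp add: open_box)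
  also have "\<dots> = (\<Prod>b\<in>Basis. (u - l) \<bullet> b)"
    using le by (simp add: emeasure_lborel_box_eq)
  finally show "emeasure (distr lborel borel g) (box l u) = (\<Prod>b\<in>Basis. (u - l) \<bullet> b)" .
qed simp

lemma orth_props:
  fixes R :: "real^'n^'n"
  assumes R: "orthogonal_matrix R"
  shows "linear ((*v) R)" "\<And>x. norm (R *v x) = norm x" "linear ((*v) (transpose R))"
    "\<And>x. transpose R *v (R *v x) = x" "\<And>x. R *v (transpose R *v x) = x"
proof -
  show l: "linear ((*v) R)" by (simp add: matrix_vector_mul_linear)
  have "orthogonal_transformation ((*v) R)"
    using R l by (simp add: orthogonal_transformation_matrix)
  then show "\<And>x. norm (R *v x) = norm x" by (simp add: orthogonal_transformation)
  show "linear ((*v) (transpose R))" by (simp add: matrix_vector_mul_linear)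
  show "\<And>x. transpose R *v (R *v x) = x" using R
    by (metis matrix_vector_mul_assoc matrix_vector_mul_lid orthogonal_matrix_def)
  show "\<And>x. R *v (transpose R *v x) = x" using R
    by (metis matrix_vector_mul_assoc matrix_vector_mul_lid orthogonal_matrix_def)
qed

lemma nn_integral_rotation:
  fixes f :: "real^'n \<Rightarrow> ennreal" and R :: "real^'n^'n"
  assumes f[measurable]: "f \<in> borel_measurable borel" and R: "orthogonal_matrix R"
  shows "(\<integral>\<^sup>+x. f (R *v x) \<partial>lborel) = (\<integral>\<^sup>+x. f x \<partial>lborel)"
proof -
  note P = orth_props[OF R]
  have gm: "(*v) R \<in> borel_measurable borel"
    using P(1) by (intro borel_measurable_continuous_onI linear_continuous_on) (simp add: linear_linear)
  have "(\<integral>\<^sup>+x. f x \<partial>lborel) = (\<integral>\<^sup>+x. f x \<partial>distr lborel borel ((*v) R))"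
    using distr_isometry[OF P(1) P(2) P(3) P(4) P(5)] by simp
  also have "\<dots> = (\<integral>\<^sup>+x. f (R *v x) \<partial>lborel)"
    using gm by (subst nn_integral_distr) auto
  finally show ?thesis ..
qed

lemma nn_integral_translation:
  fixes f :: "'a::euclidean_space \<Rightarrow> ennreal"
  assumes f[measurable]: "f \<in> borel_measurable borel"
  shows "(\<integral>\<^sup>+x. f (x + t) \<partial>lborel) = (\<integral>\<^sup>+x. f x \<partial>lborel)"
proof -
  have "distr lborel borel (\<lambda>x. t + x) = (lborel::'a measure)"
    using lborel_affine[of 1 t] by (simp add: density_1)
  then have "(\<integral>\<^sup>+x. f x \<partial>lborel) = (\<integral>\<^sup>+x. f x \<partial>distr lborel borel (\<lambda>x. t + x))" by simp
  also have "\<dots> = (\<integral>\<^sup>+x. f (t + x) \<partial>lborel)" by (subst nn_integral_distr) auto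
  finally show ?thesis by (simp add: add.commute)
qed

lemma nn_integral_scale:
  fixes f :: "'a::euclidean_space \<Rightarrow> ennreal"
  assumes f[measurable]: "f \<in> borel_measurable borel" and c: "c > 0"
  shows "(\<integral>\<^sup>+x. f x \<partial>lborel) = ennreal (c ^ DIM('a)) * (\<integral>\<^sup>+x. f (c *\<^sub>R x) \<partial>lborel)"
  using c by (subst lborel_affine[of c 0]) (auto simp: nn_integral_density nn_integral_distr nn_integral_cmult)

lemma nn_integral_similarity:
  fixes f :: "real^'n \<Rightarrow> ennreal" and R :: "real^'n^'n"
  assumes f[measurable]: "f \<in> borel_measurable borel" and R: "orthogonal_matrix R" and c: "c > 0"
  shows "(\<integral>\<^sup>+x. f x \<partial>lborel) = ennreal (c ^ CARD('n)) * (\<integral>\<^sup>+x. f (R *v (c *\<^sub>R x) + t) \<partial>lborel)"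
proof -
  note P = orth_props[OF R]
  have gm[measurable]: "(*v) R \<in> borel_measurable borel"
    using P(1) by (intro borel_measurable_continuous_onI linear_continuous_on) (simp add: linear_linear)
  have "(\<integral>\<^sup>+x. f x \<partial>lborel) = (\<integral>\<^sup>+x. f (x + t) \<partial>lborel)"
    by (rule nn_integral_translation[symmetric]) simp
  also have "\<dots> = (\<integral>\<^sup>+x. f (R *v x + t) \<partial>lborel)"
    by (rule nn_integral_rotation[symmetric, OF _ R, where f = "\<lambda>x. f (x + t)"]) simp
  also have "\<dots> = ennreal (c ^ DIM(real^'n)) * (\<integral>\<^sup>+x. f (R *v (c *\<^sub>R x) + t) \<partial>lborel)"
    by (rule nn_integral_scale[OF _ c]) simp
  finally show ?thesis by simp
qed



definition Lint :: "real \<Rightarrow> 'a::euclidean_space set \<Rightarrow> 'a set \<Rightarrow> ennreal" where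
  "Lint s A B = (\<integral>\<^sup>+ x. indicator A x *
        (\<integral>\<^sup>+ y. indicator B y * ennreal (dist x y powr (- (real DIM('a) + s))) \<partial>lborel) \<partial>lborel)"

lemma frac_perimeter_Lint: "frac_perimeter s E = Lint s E (- E)"
  by (simp add: frac_perimeter_def Lint_def)

lemma Lint_inner_measurable[measurable]:
  fixes A B :: "'a::euclidean_space set"
  assumes [measurable]: "A \<in> sets borel" "B \<in> sets borel"
  shows "(\<lambda>x. indicator A x * (\<integral>\<^sup>+ y. indicator B y * ennreal (dist x y powr (- (real DIM('a) + s))) \<partial>lborel))
     \<in> borel_measurable borel"
  by measurable

definition simil :: "real^'n^'n \<Rightarrow> real \<Rightarrow> real^'n \<Rightarrow> real^'n \<Rightarrow> real^'n" where
  "simil R c t x = R *v (c *\<^sub>R x) + t"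

lemma simil_props:
  fixes R :: "real^'n^'n"
  assumes R: "orthogonal_matrix R" and c: "c > 0"
  shows "dist (simil R c t x) (simil R c t y) = c * dist x y"
    and "inj (simil R c t)"
    and "simil R c t ` B = (\<lambda>z. (1/c) *\<^sub>R (transpose R *v (z - t))) -` B"
    and "simil R c t \<in> borel_measurable borel"
    and "- (simil R c t ` B) = simil R c t ` (- B)"
proof -
  note P = orth_props[OF R]
  have d: "simil R c t x - simil R c t y = R *v (c *\<^sub>R (x - y))" for x y
    unfolding simil_def by (metis P(1) add_diff_cancel_right linear_diff scaleR_right_diff_distrib)
  show dd: "dist (simil R c t x) (simil R c t y) = c * dist x y" for x y
    unfolding dist_norm d P(2) using c by simp
  show inj: "inj (simil R c t)"
    by (rule injI) (metis dd c dist_eq_0_iff mult_eq_0_iff less_irrefl)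
  have inv1: "(1/c) *\<^sub>R (transpose R *v (simil R c t x - t)) = x" for x
    using c unfolding simil_def by (simp add: P(4) del: transpose_matrix_vector)
  have inv2: "simil R c t ((1/c) *\<^sub>R (transpose R *v (z - t))) = z" for z
    using c unfolding simil_def by (simp add: P(5) del: transpose_matrix_vector)
  show im: "simil R c t ` B = (\<lambda>z. (1/c) *\<^sub>R (transpose R *v (z - t))) -` B" for B
  proof
    show "simil R c t ` B \<subseteq> (\<lambda>z. (1/c) *\<^sub>R (transpose R *v (z - t))) -` B" using inv1 by auto
    show "(\<lambda>z. (1/c) *\<^sub>R (transpose R *v (z - t))) -` B \<subseteq> simil R c t ` B"
      using inv2 by (metis image_eqI subsetI vimageE)
  qed
  have bl: "bounded_linear ((*v) R)" using P(1) by (simp add: linear_linear)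
  show "simil R c t \<in> borel_measurable borel"
    unfolding simil_def[abs_def]
    by (intro borel_measurable_continuous_onI continuous_intros bounded_linear.continuous_on[OF bl])
  show "- (simil R c t ` B) = simil R c t ` (- B)"
    unfolding im by auto
qed


lemma nn_integral_simil:
  fixes f :: "real^'n \<Rightarrow> ennreal" and R :: "real^'n^'n"
  assumes f[measurable]: "f \<in> borel_measurable borel" and R: "orthogonal_matrix R" and c: "c > 0"
  shows "(\<integral>\<^sup>+x. f x \<partial>lborel) = ennreal (c ^ CARD('n)) * (\<integral>\<^sup>+x. f (simil R c t x) \<partial>lborel)"
  unfolding simil_def by (rule nn_integral_similarity[OF f R c])

lemma simil_sets:
  fixes R :: "real^'n^'n"
  assumes R: "orthogonal_matrix R" and c: "c > 0" and B: "B \<in> sets borel"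
  shows "simil R c t ` B \<in> sets borel"
proof -
  have bl: "bounded_linear ((*v) (transpose R))" by (simp add: linear_linear[symmetric] matrix_vector_mul_linear)
  have m: "(\<lambda>z. (1/c) *\<^sub>R (transpose R *v (z - t))) \<in> borel_measurable borel"
    by (intro borel_measurable_continuous_onI continuous_intros continuous_on_compose2[OF bounded_linear.continuous_on[OF bl, of UNIV]]) auto
  show ?thesis unfolding simil_props(3)[OF R c] using measurable_sets_borel[OF m B] by simp
qed

lemma Lint_similar:
  fixes A B :: "(real^'n) set" and R :: "real^'n^'n"
  assumes R: "orthogonal_matrix R" and c: "c > 0" and [measurable]: "A \<in> sets borel" "B \<in> sets borel"
  shows "Lint s (simil R c t ` A) (simil R c t ` B) = ennreal (c powr (real CARD('n) - s)) * Lint s A B"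
proof -
  let ?G = "simil R c t"
  let ?n = "real CARD('n)"
  have [measurable]: "?G ` A \<in> sets borel" "?G ` B \<in> sets borel" using simil_sets[OF R c] assms(3,4) by auto
  have Gm[measurable]: "?G \<in> borel_measurable borel" using simil_props(4)[OF R c] .
  have indG: "indicator (?G ` X) (?G x) = (indicator X x :: ennreal)" for X x
    using simil_props(2)[OF R c] by (simp add: indicator_def inj_image_mem_iff)
  have K: "ennreal (dist (?G x) (?G y) powr (- ?n - s)) = ennreal (c powr (- ?n - s)) * ennreal (dist x y powr (- ?n - s))" for x y
    using c by (simp add: simil_props(1)[OF R c] powr_mult ennreal_mult[symmetric])
  have inner: "(\<integral>\<^sup>+ y. indicator (?G ` B) y * ennreal (dist x y powr (- (?n + s))) \<partial>lborel)
     = ennreal (c ^ CARD('n)) * (\<integral>\<^sup>+ y. indicator B y * ennreal (dist x (?G y) powr (- (?n + s))) \<partial>lborel)" for x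
    by (subst nn_integral_simil[OF _ R c, of _ t]) (auto simp: indG)
  have "Lint s (?G ` A) (?G ` B) = (\<integral>\<^sup>+ x. indicator (?G ` A) x * (ennreal (c ^ CARD('n)) *
      (\<integral>\<^sup>+ y. indicator B y * ennreal (dist x (?G y) powr (- (?n + s))) \<partial>lborel)) \<partial>lborel)"
    by (simp only: Lint_def DIM_cart DIM_real mult.right_neutral inner)
  also have "\<dots> = ennreal (c ^ CARD('n)) * (\<integral>\<^sup>+ x. indicator A x * (ennreal (c ^ CARD('n)) *
      (\<integral>\<^sup>+ y. indicator B y * ennreal (dist (?G x) (?G y) powr (- (?n + s))) \<partial>lborel)) \<partial>lborel)"
    by (subst nn_integral_simil[OF _ R c, of _ t]) (auto simp: indG)
  also have "\<dots> = ennreal (c ^ CARD('n)) * (\<integral>\<^sup>+ x. (ennreal (c ^ CARD('n)) * ennreal (c powr (- (?n + s)))) *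
      (indicator A x * (\<integral>\<^sup>+ y. indicator B y * ennreal (dist x y powr (- (?n + s))) \<partial>lborel)) \<partial>lborel)"
  proof -
    have inner2: "(\<integral>\<^sup>+ y. indicator B y * (ennreal (c powr (- ?n - s)) * ennreal (dist x y powr (- ?n - s))) \<partial>lborel)
       = ennreal (c powr (- ?n - s)) * (\<integral>\<^sup>+ y. indicator B y * ennreal (dist x y powr (- ?n - s)) \<partial>lborel)" for x
      by (subst nn_integral_cmult[symmetric]) (auto intro!: nn_integral_cong simp: mult_ac)
    show ?thesis by (simp add: K inner2 mult_ac)
  qed
  also have "\<dots> = ennreal (c ^ CARD('n)) * (ennreal (c ^ CARD('n)) * ennreal (c powr (- (?n + s)))) * Lint s A B"
    unfolding Lint_def by (subst nn_integral_cmult) (auto simp: mult.assoc)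
  also have "ennreal (c ^ CARD('n)) * (ennreal (c ^ CARD('n)) * ennreal (c powr (- (?n + s)))) = ennreal (c powr (?n - s))"
  proof -
    have "c ^ CARD('n) = c powr ?n" using c by (simp add: powr_realpow)
    then have "c ^ CARD('n) * (c ^ CARD('n) * c powr (- (?n + s))) = c powr (?n - s)"
      using c by (simp add: powr_add[symmetric])
    then show ?thesis using c by (simp add: ennreal_mult[symmetric])
  qed
  finally show ?thesis .
qed



lemma frac_union_le:
  fixes A :: "nat \<Rightarrow> nat \<Rightarrow> 'a::euclidean_space set"
  assumes fin: "\<And>k. finite (I k)" and meas[measurable]: "\<And>k i. A k i \<in> sets borel"
    and U: "U = (\<Union>k. \<Union>i\<in>I k. A k i)"
  shows "frac_perimeter s U \<le> (\<Sum>k. \<Sum>i\<in>I k. frac_perimeter s (A k i))"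
proof -
  let ?K = "\<lambda>x y. ennreal (dist x y powr (- (real DIM('a) + s)))"
  let ?g = "\<lambda>X x. indicator X x * (\<integral>\<^sup>+ y. indicator (- X) y * ?K x y \<partial>lborel)"
  have Um[measurable]: "U \<in> sets borel" unfolding U using fin by auto
  have pw: "?g U x \<le> (\<Sum>k. \<Sum>i\<in>I k. ?g (A k i) x)" for x
  proof (cases "x \<in> U")
    case False then show ?thesis by simp
  next
    case True
    then obtain k0 i0 where ki: "i0 \<in> I k0" "x \<in> A k0 i0" unfolding U by blast
    have "?g U x \<le> ?g (A k0 i0) x"
      using ki True
      by (auto intro!: nn_integral_mono mult_right_mono simp: indicator_def U)
    also have "\<dots> \<le> (\<Sum>i\<in>I k0. ?g (A k0 i) x)"
      using ki fin by (intro member_le_sum) auto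
    also have "\<dots> \<le> (\<Sum>k. \<Sum>i\<in>I k. ?g (A k i) x)"
      using sum_le_suminf[OF summableI, of "{k0}" "\<lambda>k. \<Sum>i\<in>I k. ?g (A k i) x"] by simp
    finally show ?thesis .
  qed
  have "frac_perimeter s U = (\<integral>\<^sup>+ x. ?g U x \<partial>lborel)" by (simp add: frac_perimeter_def)
  also have "\<dots> \<le> (\<integral>\<^sup>+ x. (\<Sum>k. \<Sum>i\<in>I k. ?g (A k i) x) \<partial>lborel)"
    by (intro nn_integral_mono pw)
  also have "\<dots> = (\<Sum>k. \<integral>\<^sup>+ x. (\<Sum>i\<in>I k. ?g (A k i) x) \<partial>lborel)"
    by (rule nn_integral_suminf) measurable
  also have "\<dots> = (\<Sum>k. \<Sum>i\<in>I k. \<integral>\<^sup>+ x. ?g (A k i) x \<partial>lborel)"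
    by (subst nn_integral_sum) auto
  also have "\<dots> = (\<Sum>k. \<Sum>i\<in>I k. frac_perimeter s (A k i))" by (simp add: frac_perimeter_def)
  finally show ?thesis .
qed



lemma Lint_pos:
  fixes A B :: "'a::euclidean_space set"
  assumes [measurable]: "A \<in> sets borel" "B \<in> sets borel"
    and A: "emeasure lborel A > 0" and B: "emeasure lborel B > 0"
  shows "Lint s A B > 0"
proof -
  let ?K = "\<lambda>x y. ennreal (dist x y powr (- (real DIM('a) + s)))"
  have inner: "(\<integral>\<^sup>+ y. indicator B y * ?K x y \<partial>lborel) > 0" for x
  proof (rule ccontr)
    assume "\<not> ?thesis"
    then have "(\<integral>\<^sup>+ y. indicator B y * ?K x y \<partial>lborel) = 0" by (simp add: zero_less_iff_neq_zero)
    then have "AE y in lborel. indicator B y * ?K x y = 0"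
      by (subst (asm) nn_integral_0_iff_AE) auto
    then have "AE y in lborel. y \<in> B \<longrightarrow> y = x"
      by (rule AE_mp) (auto intro!: AE_I2 simp: indicator_def)
    moreover have "AE y in lborel. y \<noteq> x"
      by (rule AE_I[where N="{x}"]) auto
    ultimately have "AE y in lborel. y \<notin> B" by eventually_elim auto
    then have "emeasure lborel B = 0"
      by (subst (asm) AE_iff_measurable[OF _ refl]) auto
    with B show False by simp
  qed
  show ?thesis
  proof (rule ccontr)
    assume "\<not> ?thesis"
    then have "Lint s A B = 0" by (simp add: zero_less_iff_neq_zero)
    then have ae: "AE x in lborel. indicator A x * (\<integral>\<^sup>+ y. indicator B y * ?K x y \<partial>lborel) = 0"
      unfolding Lint_def by (subst (asm) nn_integral_0_iff_AE) auto
    have pt: "x \<notin> A" if "indicator A x * (\<integral>\<^sup>+ y. indicator B y * ?K x y \<partial>lborel) = 0" for x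
      using inner[of x] that by (auto simp: indicator_def)
    have "AE x in lborel. x \<notin> A"
      using ae by (rule AE_mp) (rule AE_I2, use pt in blast)
    then have "emeasure lborel A = 0"
      by (subst (asm) AE_iff_measurable[OF _ refl]) auto
    with A show False by simp
  qed
qed



lemma shell_exists: "t > 0 \<Longrightarrow> \<exists>j::int. 2 powr j \<le> t \<and> t < 2 powr (j + 1)"
  using floor_log_eq_powr_iff one_less_numeral_iff semiring_norm(76) by blast

lemma shell_integral_bound:
  fixes g :: "'a::euclidean_space \<Rightarrow> ennreal" and j :: int and s :: real
  assumes g[measurable]: "g \<in> borel_measurable borel" and Bd: "\<And>h. 2 powr j \<le> norm h \<Longrightarrow> norm h < 2 powr (j+1) \<Longrightarrow> g h \<le> ennreal G"
    and G: "G \<ge> 0" and s: "s > 0"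
  shows "(\<integral>\<^sup>+ h. indicator {h. 2 powr j \<le> norm h \<and> norm h < 2 powr (j+1)} h * (ennreal (norm h powr (- (real DIM('a) + s))) * g h) \<partial>lborel)
     \<le> ennreal (G * unit_ball_vol (real DIM('a)) * 2 powr (real DIM('a)) * 2 powr (- j * s))"
proof -
  let ?n = "real DIM('a)"
  let ?A = "{h::'a. 2 powr j \<le> norm h \<and> norm h < 2 powr (j+1)}"
  have Am: "?A \<in> sets borel" by measurable
  have pt: "indicator ?A h * (ennreal (norm h powr (- (?n + s))) * g h) \<le> ennreal (2 powr (- j * (?n + s)) * G) * indicator ?A h" for h
  proof (cases "h \<in> ?A")
    case True
    then have h: "2 powr j \<le> norm h" "norm h < 2 powr (j+1)" by auto
    have "norm h powr (- (?n + s)) \<le> (2 powr j) powr (- (?n + s))"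
      using h s by (intro powr_mono2') auto
    also have "\<dots> = 2 powr (- j * (?n + s))" by (simp add: powr_powr algebra_simps)
    finally have "ennreal (norm h powr (- (?n + s))) * g h \<le> ennreal (2 powr (- j * (?n + s))) * ennreal G"
      using Bd[OF h] by (intro mult_mono) (auto intro: ennreal_leI)
    then show ?thesis using True G by (simp add: ennreal_mult)
  qed simp
  have "(\<integral>\<^sup>+ h. indicator ?A h * (ennreal (norm h powr (- (?n + s))) * g h) \<partial>lborel)
     \<le> (\<integral>\<^sup>+ h. ennreal (2 powr (- j * (?n + s)) * G) * indicator ?A h \<partial>lborel)"
    by (intro nn_integral_mono pt)
  also have "\<dots> = ennreal (2 powr (- j * (?n + s)) * G) * emeasure lborel ?A"
    using Am by (simp add: nn_integral_cmult_indicator)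
  also have "\<dots> \<le> ennreal (2 powr (- j * (?n + s)) * G) * emeasure lborel (ball (0::'a) (2 powr (j+1)))"
    by (intro mult_left_mono emeasure_mono) auto
  also have "\<dots> = ennreal (2 powr (- j * (?n + s)) * G * (unit_ball_vol ?n * (2 powr (j+1)) ^ DIM('a)))"
    using G by (simp add: emeasure_ball ennreal_mult)
  also have "2 powr (- j * (?n + s)) * G * (unit_ball_vol ?n * (2 powr (j+1)) ^ DIM('a))
      = G * unit_ball_vol ?n * 2 powr ?n * 2 powr (- j * s)"
  proof -
    have "(2 powr (j+1)) ^ DIM('a) = 2 powr ((j+1) * ?n)"
      by (simp add: powr_realpow[symmetric] powr_powr)
    then have "2 powr (- j * (?n + s)) * (2 powr (j+1)) ^ DIM('a) = 2 powr ?n * 2 powr (- j * s)"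
      by (simp add: powr_add[symmetric] algebra_simps)
    then show ?thesis by (simp add: mult_ac)
  qed
  finally show ?thesis .
qed


lemma ennreal_le_suminf: "(f::nat\<Rightarrow>ennreal) k \<le> suminf f"
  using sum_le_suminf[OF summableI, of "{k}" f] by simp

lemma geom_ennreal_finite:
  fixes x :: "nat \<Rightarrow> ennreal"
  assumes "\<And>m. x m \<le> ennreal (K * q ^ m)" "0 \<le> q" "q < 1" "K \<ge> 0"
  shows "(\<Sum>m. x m) < \<infinity>"
proof -
  have sq: "summable (\<lambda>m. K * q ^ m)" using assms by (intro summable_mult summable_geometric) auto
  have "(\<Sum>m. x m) \<le> (\<Sum>m. ennreal (K * q ^ m))" by (intro suminf_le assms(1)) auto
  also have "\<dots> < \<infinity>" using sq assms
    by (metis ennreal_suminf_neq_top infinity_ennreal_def top.not_eq_extremum mult_nonneg_nonneg zero_le_power)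
  finally show ?thesis .
qed

lemma kernel_finite:
  fixes g :: "'a::euclidean_space \<Rightarrow> ennreal" and s :: real
  assumes g[measurable]: "g \<in> borel_measurable borel" and s: "0 < s" "s < 1"
    and M: "M \<ge> 0" and C: "C \<ge> 0"
    and gM: "\<And>h. g h \<le> ennreal M" and gC: "\<And>h. g h \<le> ennreal (C * norm h)"
  shows "(\<integral>\<^sup>+ h. ennreal (norm h powr (- (real DIM('a) + s))) * g h \<partial>lborel) < \<infinity>"
proof -
  let ?n = "real DIM('a)"
  let ?F = "\<lambda>h::'a. ennreal (norm h powr (- (?n + s))) * g h"
  define Sh where "Sh j = {h::'a. 2 powr j \<le> norm h \<and> norm h < 2 powr (j+1)}" for j :: int
  have Shm[measurable]: "Sh j \<in> sets borel" for j unfolding Sh_def by measurable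
  let ?S1 = "\<lambda>h. (\<Sum>m. indicator (Sh (int m)) h * ?F h)"
  let ?S2 = "\<lambda>h. (\<Sum>m. indicator (Sh (- int m - 1)) h * ?F h)"
  have pt: "?F h \<le> ?S1 h + ?S2 h" if hne: "h \<noteq> 0" for h
  proof -
    obtain j :: int where j: "2 powr j \<le> norm h" "norm h < 2 powr (j + 1)" using shell_exists[of "norm h"] hne by auto
    have hj: "h \<in> Sh j" using j by (simp add: Sh_def)
    show ?thesis
    proof (cases "j \<ge> 0")
      case True
      define m where "m = nat j"
      have m: "j = int m" using True by (simp add: m_def)
      have "?F h = indicator (Sh (int m)) h * ?F h" using hj m by (simp add: indicator_def)
      also have "\<dots> \<le> ?S1 h"
        by (rule ennreal_le_suminf[of "\<lambda>m. indicator (Sh (int m)) h * ?F h"])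
      finally show ?thesis by (rule order_trans) (rule add_increasing2, auto)
    next
      case False
      define m where "m = nat (- j - 1)"
      have m: "j = - int m - 1" using False by (simp add: m_def)
      have "?F h = indicator (Sh (- int m - 1)) h * ?F h" using hj m by (simp add: indicator_def)
      also have "\<dots> \<le> ?S2 h"
        by (rule ennreal_le_suminf[of "\<lambda>m. indicator (Sh (- int m - 1)) h * ?F h"])
      finally show ?thesis by (rule order_trans) (rule add_increasing, auto)
    qed
  qed
  have "(\<integral>\<^sup>+ h. ?F h \<partial>lborel) \<le> (\<integral>\<^sup>+ h. ?S1 h + ?S2 h \<partial>lborel)"
  proof (rule nn_integral_mono_AE)
    show "AE h in lborel. ?F h \<le> ?S1 h + ?S2 h"
    proof -
      have "AE h in lborel. h \<noteq> (0::'a)" by (rule AE_I[where N="{0}"]) auto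
      then show ?thesis by (rule AE_mp) (rule AE_I2, use pt in auto)
    qed
  qed
  also have "\<dots> = (\<integral>\<^sup>+ h. ?S1 h \<partial>lborel) + (\<integral>\<^sup>+ h. ?S2 h \<partial>lborel)"
    by (rule nn_integral_add) measurable
  also have "(\<integral>\<^sup>+ h. ?S1 h \<partial>lborel) = (\<Sum>m. \<integral>\<^sup>+ h. indicator (Sh (int m)) h * ?F h \<partial>lborel)"
    by (rule nn_integral_suminf) measurable
  also have "(\<integral>\<^sup>+ h. ?S2 h \<partial>lborel) = (\<Sum>m. \<integral>\<^sup>+ h. indicator (Sh (- int m - 1)) h * ?F h \<partial>lborel)"
    by (rule nn_integral_suminf) measurable
  also have "(\<Sum>m. \<integral>\<^sup>+ h. indicator (Sh (int m)) h * ?F h \<partial>lborel) +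
             (\<Sum>m. \<integral>\<^sup>+ h. indicator (Sh (- int m - 1)) h * ?F h \<partial>lborel) < \<infinity>"
  proof -
    define K1 where "K1 = M * unit_ball_vol ?n * 2 powr ?n"
    have K1: "K1 \<ge> 0" unfolding K1_def using M by simp
    have f1: "(\<Sum>m. \<integral>\<^sup>+ h. indicator (Sh (int m)) h * ?F h \<partial>lborel) < \<infinity>"
    proof (rule geom_ennreal_finite[where K = K1 and q = "2 powr (- s)"])
      fix m :: nat
      have "(\<integral>\<^sup>+ h. indicator (Sh (int m)) h * ?F h \<partial>lborel) \<le> ennreal (K1 * 2 powr (- int m * s))"
        unfolding Sh_def K1_def using shell_integral_bound[OF g _ M s(1), of "int m"] gM by simp
      also have "2 powr (- int m * s) = (2 powr (- s)) ^ m"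
        by (simp add: powr_realpow[symmetric] powr_powr mult.commute)
      finally show "(\<integral>\<^sup>+ h. indicator (Sh (int m)) h * ?F h \<partial>lborel) \<le> ennreal (K1 * (2 powr (- s)) ^ m)" .
    qed (use s K1 in \<open>auto simp: powr_less_one\<close>)
    define K2 where "K2 = C * unit_ball_vol ?n * 2 powr ?n * 2 powr s"
    have K2: "K2 \<ge> 0" unfolding K2_def using C by simp
    have f2: "(\<Sum>m. \<integral>\<^sup>+ h. indicator (Sh (- int m - 1)) h * ?F h \<partial>lborel) < \<infinity>"
    proof (rule geom_ennreal_finite[where K = K2 and q = "2 powr (- (1 - s))"])
      fix m :: nat
      have b: "g h \<le> ennreal (C * 2 powr (- int m))" if "norm h < 2 powr ((- int m - 1) + 1)" for h
      proof -
        have "C * norm h \<le> C * 2 powr (- int m)" using that C by (intro mult_left_mono) auto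
        then show ?thesis using gC[of h] by (meson ennreal_leI order_trans)
      qed
      have "(\<integral>\<^sup>+ h. indicator (Sh (- int m - 1)) h * ?F h \<partial>lborel)
          \<le> ennreal ((C * 2 powr (- int m)) * unit_ball_vol ?n * 2 powr ?n * 2 powr (- (- int m - 1) * s))"
        unfolding Sh_def using shell_integral_bound[OF g _ _ s(1), of "- int m - 1" "C * 2 powr (- int m)"] b C
        by simp
      also have "(C * 2 powr (- int m)) * unit_ball_vol ?n * 2 powr ?n * 2 powr (- (- int m - 1) * s)
          = K2 * (2 powr (- (1 - s))) ^ m"
      proof -
        have "(2 powr (- (1 - s))) ^ m = 2 powr (- real m * (1 - s))"
          by (simp add: powr_realpow[symmetric] powr_powr algebra_simps)
        moreover have "2 powr (- int m) * 2 powr (- (- int m - 1) * s) = 2 powr s * 2 powr (- real m * (1 - s))"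
          by (simp add: powr_add[symmetric] algebra_simps)
        ultimately show ?thesis unfolding K2_def by (simp add: mult_ac)
      qed
      finally show "(\<integral>\<^sup>+ h. indicator (Sh (- int m - 1)) h * ?F h \<partial>lborel) \<le> ennreal (K2 * (2 powr (- (1 - s))) ^ m)" .
    qed (use s K2 in \<open>auto simp: powr_less_one\<close>)
    show ?thesis using f1 f2 by (simp add: top.not_eq_extremum[symmetric] ennreal_add_eq_top)
  qed
  finally show ?thesis .
qed



lemma frac_shift_repr:
  fixes E :: "'a::euclidean_space set"
  assumes Em[measurable]: "E \<in> sets borel"
  shows "frac_perimeter s E = (\<integral>\<^sup>+ h. ennreal (norm h powr (- (real DIM('a) + s))) *
            (\<integral>\<^sup>+ x. indicator E x * indicator (- E) (x + h) \<partial>lborel) \<partial>lborel)"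
proof -
  let ?k = "\<lambda>h::'a. ennreal (norm h powr (- (real DIM('a) + s)))"
  have inner: "(\<integral>\<^sup>+ y. indicator (- E) y * ennreal (dist x y powr (- (real DIM('a) + s))) \<partial>lborel)
      = (\<integral>\<^sup>+ h. indicator (- E) (x + h) * ?k h \<partial>lborel)" for x
  proof -
    have "(\<integral>\<^sup>+ h. indicator (- E) (h + x) * ennreal (dist x (h + x) powr (- (real DIM('a) + s))) \<partial>lborel)
        = (\<integral>\<^sup>+ y. indicator (- E) y * ennreal (dist x y powr (- (real DIM('a) + s))) \<partial>lborel)"
      by (rule nn_integral_translation[where f = "\<lambda>y. indicator (- E) y * ennreal (dist x y powr (- (real DIM('a) + s)))"]) measurable
    then show ?thesis by (simp add: dist_norm add.commute)
  qed
  have "frac_perimeter s E = (\<integral>\<^sup>+ x. (\<integral>\<^sup>+ h. indicator E x * (indicator (- E) (x + h) * ?k h) \<partial>lborel) \<partial>lborel)"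
    unfolding frac_perimeter_def inner
    by (intro nn_integral_cong nn_integral_cmult[symmetric]) measurable
  also have "\<dots> = (\<integral>\<^sup>+ h. (\<integral>\<^sup>+ x. indicator E x * (indicator (- E) (x + h) * ?k h) \<partial>lborel) \<partial>lborel)"
    by (rule lborel_pair.Fubini'[symmetric]) measurable
  also have "\<dots> = (\<integral>\<^sup>+ h. ?k h * (\<integral>\<^sup>+ x. indicator E x * indicator (- E) (x + h) \<partial>lborel) \<partial>lborel)"
    by (intro nn_integral_cong) (subst nn_integral_cmult[symmetric], measurable, simp add: mult_ac)
  finally show ?thesis .
qed



lemma set_integrable_cont:
  fixes f :: "'a::euclidean_space \<Rightarrow> real"
  assumes f: "continuous_on UNIV f" and E: "bounded E" "E \<in> sets borel"
  shows "set_integrable lborel E f"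
proof -
  have "compact (f ` closure E)"
    using E by (intro compact_continuous_image continuous_on_subset[OF f]) (auto simp: compact_closure)
  then obtain B where B: "\<And>x. x \<in> closure E \<Longrightarrow> norm (f x) \<le> B"
    by (meson bounded_iff compact_imp_bounded imageI)
  have fm: "f \<in> borel_measurable lborel" using f by (simp add: borel_measurable_continuous_onI)
  have fin: "emeasure lborel E < \<infinity>"
  proof -
    obtain r where "\<forall>x\<in>E. norm x \<le> r" using E(1) unfolding bounded_iff by blast
    then have "E \<subseteq> cball 0 r" by (auto simp: dist_norm)
    then have "emeasure lborel E \<le> emeasure lborel (cball (0::'a) r)" by (intro emeasure_mono) auto
    then show ?thesis using emeasure_lborel_cball_finite[of "0::'a" r] by (meson le_less_trans)
  qed
  show ?thesis unfolding set_integrable_def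
  proof (rule integrableI_bounded_set_indicator[where B=B])
    show "E \<in> sets lborel" using E(2) by simp
    show "f \<in> borel_measurable lborel" by (rule fm)
    show "emeasure lborel E < \<infinity>" by (rule fin)
    show "AE x in lborel. x \<in> E \<longrightarrow> norm (f x) \<le> B"
      by (rule AE_I2) (meson B closure_subset subsetD)
  qed
qed

lemma has_derivative_shift:
  assumes "\<And>y. (u has_derivative f' y) (at y)"
  shows "((\<lambda>x. u (x - c)) has_derivative f' (x - c)) (at x)"
proof -
  have "((\<lambda>x. x - c) has_derivative (\<lambda>w. w)) (at x)"
    by (auto intro!: derivative_eq_intros)
  from has_derivative_compose[OF this assms[of "x - c"]] show ?thesis by simp
qed

lemma step_err:
  fixes u :: "'a::euclidean_space \<Rightarrow> real"
  assumes du: "\<And>y. (u has_derivative f' y) (at y)"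
    and uc: "\<And>y z. y \<in> K \<Longrightarrow> z \<in> K \<Longrightarrow> dist y z < \<delta> \<Longrightarrow> \<bar>f' y h - f' z h\<bar> < \<eta>"
    and seg: "\<And>t. a \<le> t \<Longrightarrow> t \<le> b \<Longrightarrow> x - t *\<^sub>R h \<in> K"
    and ab: "a < b" "(b - a) * norm h < \<delta>"
  shows "u (x - a *\<^sub>R h) - u (x - b *\<^sub>R h) \<le> (b - a) * f' (x - a *\<^sub>R h) h + (b - a) * \<eta>"
proof -
  define q where "q t = u (x - t *\<^sub>R h)" for t
  have lin: "linear (f' y)" for y using du[of y] has_derivative_linear by blast
  have dq: "(q has_derivative (\<lambda>dt. - (dt * f' (x - t *\<^sub>R h) h))) (at t within {a..b})" for t
  proof -
    have "((\<lambda>t. x - t *\<^sub>R h) has_derivative (\<lambda>dt. - (dt *\<^sub>R h))) (at t within {a..b})"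
      by (auto intro!: derivative_eq_intros)
    from has_derivative_compose[OF this du[of "x - t *\<^sub>R h"]]
    have "(q has_derivative (\<lambda>dt. f' (x - t *\<^sub>R h) (- (dt *\<^sub>R h)))) (at t within {a..b})"
      by (simp add: q_def[abs_def])
    moreover have "f' (x - t *\<^sub>R h) (- (dt *\<^sub>R h)) = - (dt * f' (x - t *\<^sub>R h) h)" for dt
      using lin by (simp add: linear_neg linear_cmul)
    ultimately show ?thesis by simp
  qed
  obtain \<tau> where \<tau>: "\<tau> \<in> {a<..<b}" "q b - q a = - ((b - a) * f' (x - \<tau> *\<^sub>R h) h)"
    using mvt_simple[OF ab(1) dq] by blast
  have "dist (x - \<tau> *\<^sub>R h) (x - a *\<^sub>R h) = (\<tau> - a) * norm h"
    using \<tau>(1) by (simp add: dist_norm scaleR_diff_left[symmetric])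
  also have "\<dots> \<le> (b - a) * norm h" using \<tau>(1) by (intro mult_right_mono) auto
  finally have d: "dist (x - \<tau> *\<^sub>R h) (x - a *\<^sub>R h) < \<delta>" using ab(2) by simp
  have "\<bar>f' (x - \<tau> *\<^sub>R h) h - f' (x - a *\<^sub>R h) h\<bar> < \<eta>"
    using uc[OF seg seg d] \<tau>(1) by auto
  then have "f' (x - \<tau> *\<^sub>R h) h \<le> f' (x - a *\<^sub>R h) h + \<eta>" by linarith
  then have "(b - a) * f' (x - \<tau> *\<^sub>R h) h \<le> (b - a) * (f' (x - a *\<^sub>R h) h + \<eta>)"
    using ab(1) by (intro mult_left_mono) auto
  then show ?thesis using \<tau>(2) unfolding q_def by (simp add: algebra_simps)
qed



lemma perimeter_nonneg: "perimeter E \<ge> 0"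
proof -
  have adm: "admissible_field (\<lambda>x. 0::'a)"
    by (auto simp: admissible_field_def)
  have "(LINT x:E|lborel. divergence (\<lambda>x. 0::'a) x) = 0"
    by (simp add: divergence_def frechet_derivative_const)
  then have "ereal (LINT x:E|lborel. divergence (\<lambda>x. 0::'a) x) = 0" by simp
  moreover have "ereal (LINT x:E|lborel. divergence (\<lambda>x. 0::'a) x) \<le> perimeter E"
    unfolding perimeter_def using adm by (intro SUP_upper) auto
  ultimately show ?thesis by (simp add: zero_ereal_def)
qed

lemma set_integral_const_real:
  assumes "A \<in> sets lborel" "emeasure lborel A < \<infinity>"
  shows "(LINT x:A|lborel. (c::real)) = c * measure lborel A"
  using assms unfolding set_lebesgue_integral_def
  by (simp add: integral_indicator mult.commute)

lemma diff_bound: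
  fixes u :: "'a::euclidean_space \<Rightarrow> real" and E :: "'a set"
  assumes du: "\<And>y. (u has_derivative f' y) (at y)"
    and cf: "\<And>w. continuous_on UNIV (\<lambda>y. f' y w)"
    and u0: "\<And>x. 0 \<le> u x" and u1: "\<And>x. u x \<le> 1"
    and uE: "\<And>x. x \<notin> E \<Longrightarrow> u x = 0"
    and E: "bounded E" "E \<in> sets borel"
    and per: "perimeter E \<le> ereal p"
  shows "(LINT x:E|lborel. u x - u (x - h)) \<le> norm h * p"
proof (cases "h = 0")
  case True then show ?thesis by simp
next
  case hne: False
  have hpos: "norm h > 0" using hne by simp
  obtain r0 where r0: "\<forall>x\<in>E. norm x \<le> r0" using E(1) unfolding bounded_iff by blast
  define K where "K = cball (0::'a) (r0 + norm h)"
  have Kc: "compact K" unfolding K_def by simp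
  have ucont: "continuous_on UNIV u"
    using du by (meson has_derivative_continuous continuous_at_imp_continuous_on)
  have Ef: "emeasure lborel E < \<infinity>"
  proof -
    have "E \<subseteq> cball 0 r0" using r0 by (auto simp: dist_norm)
    then have "emeasure lborel E \<le> emeasure lborel (cball (0::'a) r0)" by (intro emeasure_mono) auto
    then show ?thesis using emeasure_lborel_cball_finite[of "0::'a" r0] by (meson le_less_trans)
  qed
  define mE where "mE = measure lborel E"
  have mE0: "mE \<ge> 0" by (simp add: mE_def)
  have lin: "linear (f' y)" for y using du[of y] has_derivative_linear by blast
  have main: "(LINT x:E|lborel. u x - u (x - h)) \<le> norm h * p + \<eta> * mE" if eta: "\<eta> > 0" for \<eta>
  proof -
    have "uniformly_continuous_on K (\<lambda>y. f' y h)"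
      by (rule compact_uniformly_continuous[OF continuous_on_subset[OF cf] Kc]) simp
    then obtain \<delta> where \<delta>: "\<delta> > 0" "\<And>y z. y \<in> K \<Longrightarrow> z \<in> K \<Longrightarrow> dist z y < \<delta> \<Longrightarrow> dist (f' z h) (f' y h) < \<eta>"
      unfolding uniformly_continuous_on_def using eta by metis
    have uc: "\<bar>f' y h - f' z h\<bar> < \<eta>" if "y \<in> K" "z \<in> K" "dist y z < \<delta>" for y z
      using \<delta>(2)[OF that(2) that(1)] that(3) by (simp add: dist_real_def dist_commute abs_minus_commute)
    obtain N :: nat where N: "real N > norm h / \<delta>" using reals_Archimedean2 by blast
    have Npos: "real N > 0" using N hpos \<delta>(1) by (smt (verit) divide_pos_pos)
    have Nd: "norm h / real N < \<delta>" using N Npos \<delta>(1) by (simp add: divide_less_eq mult.commute)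
    define c where "c k = (real k / real N) *\<^sub>R h" for k :: nat
    define \<kappa> where "\<kappa> = inverse (real N * norm h)"
    have \<kappa>pos: "\<kappa> > 0" using Npos hpos by (simp add: \<kappa>_def)
    define \<phi> where "\<phi> x = (\<kappa> * (\<Sum>k<N. u (x - c k))) *\<^sub>R h" for x
    define D where "D x w = (\<kappa> * (\<Sum>k<N. f' (x - c k) w)) *\<^sub>R h" for x w
    have d\<phi>: "(\<phi> has_derivative D x) (at x)" for x
    proof -
      have "((\<lambda>x. \<Sum>k<N. u (x - c k)) has_derivative (\<lambda>w. \<Sum>k<N. f' (x - c k) w)) (at x)"
        by (rule has_derivative_sum) (rule has_derivative_shift[OF du])
      from has_derivative_scaleR_left[OF has_derivative_mult_right[OF this, of \<kappa>], of h]
      show ?thesis unfolding \<phi>_def[abs_def] D_def .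
    qed
    have fd: "frechet_derivative \<phi> (at x) = D x" for x using frechet_derivative_at[OF d\<phi>] by simp
    have adm: "admissible_field \<phi>"
      unfolding admissible_field_def
    proof (intro conjI allI ballI)
      show "\<phi> differentiable (at x)" for x using d\<phi> by (rule differentiableI)
      show "continuous_on UNIV (\<lambda>x. frechet_derivative \<phi> (at x) i)" for i
        unfolding fd D_def
        by (intro continuous_intros continuous_on_compose2[OF cf[of i]]) auto
      show "norm (\<phi> x) \<le> 1" for x
      proof -
        have "(\<Sum>k<N. u (x - c k)) \<le> real N" using u1 sum_mono[of "{..<N}" "\<lambda>k. u (x - c k)" "\<lambda>_. 1"] by simp
        moreover have "(\<Sum>k<N. u (x - c k)) \<ge> 0" using u0 by (simp add: sum_nonneg)
        ultimately have "\<kappa> * (\<Sum>k<N. u (x - c k)) * norm h \<le> \<kappa> * real N * norm h"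
          using \<kappa>pos hpos by (intro mult_right_mono mult_left_mono) auto
        also have "\<dots> = 1" using Npos hpos by (simp add: \<kappa>_def field_simps)
        finally show ?thesis using \<kappa>pos u0
          by (simp add: \<phi>_def abs_mult sum_nonneg)
      qed
      show "compact (closure {x. \<phi> x \<noteq> 0})"
      proof -
        have "{x. \<phi> x \<noteq> 0} \<subseteq> K"
        proof
          fix x assume "x \<in> {x. \<phi> x \<noteq> 0}"
          then have "(\<Sum>k<N. u (x - c k)) \<noteq> 0" by (auto simp: \<phi>_def)
          then obtain k where k: "k < N" "u (x - c k) \<noteq> 0" by (meson sum.neutral lessThan_iff)
          then have "x - c k \<in> E" using uE by blast
          then have "norm (x - c k) \<le> r0" using r0 by blast
          moreover have "norm (c k) \<le> norm h"
          proof -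
            have kN: "real k / real N \<le> 1" using k by simp
            then show ?thesis unfolding c_def using mult_left_le_one_le[of "norm h" "real k / real N"] by simp
          qed
          ultimately have "norm x \<le> r0 + norm h" by (metis add_mono diff_add_cancel norm_triangle_ineq order_trans)
          then show "x \<in> K" by (simp add: K_def)
        qed
        then have "closure {x. \<phi> x \<noteq> 0} \<subseteq> K" using closure_minimal[of _ K] unfolding K_def by auto
        then show ?thesis using Kc by (meson bounded_subset closed_closure compact_eq_bounded_closed compact_imp_bounded)
      qed
    qed
    have div: "divergence \<phi> x = \<kappa> * (\<Sum>k<N. f' (x - c k) h)" for x
    proof -
      have "divergence \<phi> x = (\<Sum>i\<in>Basis. \<kappa> * (\<Sum>k<N. f' (x - c k) i) * (h \<bullet> i))"
        unfolding divergence_def fd D_def by simp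
      also have "\<dots> = \<kappa> * (\<Sum>k<N. \<Sum>i\<in>Basis. (h \<bullet> i) * f' (x - c k) i)"
        by (simp add: sum_distrib_left sum_distrib_right sum.swap[of _ Basis] mult_ac)
      also have "\<dots> = \<kappa> * (\<Sum>k<N. f' (x - c k) h)"
      proof -
        have "(\<Sum>i\<in>Basis. (h \<bullet> i) * f' y i) = f' y h" for y
        proof -
          have "f' y h = f' y (\<Sum>i\<in>Basis. (h \<bullet> i) *\<^sub>R i)" by (simp add: euclidean_representation)
          also have "\<dots> = (\<Sum>i\<in>Basis. (h \<bullet> i) * f' y i)"
            using lin[of y] by (simp add: linear_sum linear_cmul)
          finally show ?thesis ..
        qed
        then show ?thesis by simp
      qed
      finally show ?thesis .
    qed
    have divc: "continuous_on UNIV (divergence \<phi>)"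
      unfolding div[abs_def] by (intro continuous_intros continuous_on_compose2[OF cf[of h]]) auto
    have per1: "(LINT x:E|lborel. divergence \<phi> x) \<le> p"
    proof -
      have "ereal (LINT x:E|lborel. divergence \<phi> x) \<le> perimeter E"
        unfolding perimeter_def using adm by (intro SUP_upper) auto
      then show ?thesis using per by (metis ereal_less_eq(3) order_trans)
    qed
    have pt: "u x - u (x - h) \<le> norm h * divergence \<phi> x + \<eta>" if x: "x \<in> E" for x
    proof -
      have seg: "x - t *\<^sub>R h \<in> K" if "0 \<le> t" "t \<le> 1" for t
      proof -
        have "norm (t *\<^sub>R h) \<le> norm h" using that by (simp add: mult_left_le_one_le)
        then have "norm (x - t *\<^sub>R h) \<le> r0 + norm h" using r0 x
          by (metis add_mono norm_triangle_ineq4 order_trans)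
        then show ?thesis by (simp add: K_def)
      qed
      have step: "u (x - c k) - u (x - c (Suc k)) \<le> (1 / real N) * f' (x - c k) h + (1 / real N) * \<eta>"
        if k: "k < N" for k
      proof -
        have "u (x - (real k / real N) *\<^sub>R h) - u (x - (real (Suc k) / real N) *\<^sub>R h)
            \<le> (real (Suc k) / real N - real k / real N) * f' (x - (real k / real N) *\<^sub>R h) h
              + (real (Suc k) / real N - real k / real N) * \<eta>"
        proof (rule step_err[OF du uc])
          fix t assume "real k / real N \<le> t" "t \<le> real (Suc k) / real N"
          moreover have "real (Suc k) / real N \<le> 1" using k Npos by (simp add: divide_le_eq_1)
          moreover have "0 \<le> real k / real N" by simp
          ultimately show "x - t *\<^sub>R h \<in> K" by (intro seg) linarith+
        next
          show "real k / real N < real (Suc k) / real N" using Npos by (simp add: divide_strict_right_mono)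
          show "(real (Suc k) / real N - real k / real N) * norm h < \<delta>"
            using Nd Npos by (simp add: diff_divide_distrib[symmetric])
        qed
        moreover have "real (Suc k) / real N - real k / real N = 1 / real N"
          by (simp add: diff_divide_distrib[symmetric])
        ultimately show ?thesis by (simp add: c_def)
      qed
      have "u x - u (x - h) = (\<Sum>k<N. u (x - c k) - u (x - c (Suc k)))"
      proof -
        have "(\<Sum>k<N. u (x - c k) - u (x - c (Suc k))) = - (\<Sum>k<N. u (x - c (Suc k)) - u (x - c k))"
          by (simp add: sum_negf[symmetric])
        also have "\<dots> = u (x - c 0) - u (x - c N)" by (subst sum_lessThan_telescope) simp
        also have "\<dots> = u x - u (x - h)" using Npos by (simp add: c_def)
        finally show ?thesis ..
      qed
      also have "\<dots> \<le> (\<Sum>k<N. (1 / real N) * f' (x - c k) h + (1 / real N) * \<eta>)"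
        by (intro sum_mono step) auto
      also have "\<dots> = (1 / real N) * (\<Sum>k<N. f' (x - c k) h) + \<eta>"
        using Npos by (simp add: sum.distrib sum_distrib_left)
      also have "(1 / real N) * (\<Sum>k<N. f' (x - c k) h) = norm h * divergence \<phi> x"
        using Npos hpos by (simp add: div \<kappa>_def field_simps)
      finally show ?thesis .
    qed
    have i1: "set_integrable lborel E (\<lambda>x. u x - u (x - h))"
      by (rule set_integrable_cont[OF _ E]) (intro continuous_intros continuous_on_compose2[OF ucont]; auto)
    have i2: "set_integrable lborel E (\<lambda>x. norm h * divergence \<phi> x + \<eta>)"
      by (rule set_integrable_cont[OF _ E]) (intro continuous_intros divc)
    have i3: "set_integrable lborel E (divergence \<phi>)"
      by (rule set_integrable_cont[OF divc E])
    have i4: "set_integrable lborel E (\<lambda>x. \<eta>)"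
      by (rule set_integrable_cont[OF _ E]) simp
    have "(LINT x:E|lborel. u x - u (x - h)) \<le> (LINT x:E|lborel. norm h * divergence \<phi> x + \<eta>)"
      by (rule set_integral_mono[OF i1 i2 pt])
    also have "\<dots> = norm h * (LINT x:E|lborel. divergence \<phi> x) + \<eta> * mE"
      using set_integral_add(2)[OF set_integrable_mult_right[OF i3, of "norm h"] i4]
        set_integral_const_real[of E \<eta>] E(2) Ef
      by (simp add: set_integral_mult_right mE_def)
    also have "\<dots> \<le> norm h * p + \<eta> * mE"
      using per1 by (simp add: mult_left_mono)
    finally show ?thesis .
  qed
  show ?thesis
  proof (rule field_le_epsilon)
    fix e :: real assume e: "e > 0"
    have "(LINT x:E|lborel. u x - u (x - h)) \<le> norm h * p + (e / (mE + 1)) * mE"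
      using main[of "e / (mE + 1)"] e mE0 by simp
    also have "(e / (mE + 1)) * mE \<le> e"
      using e mE0 by (simp add: field_simps)
    finally show "(LINT x:E|lborel. u x - u (x - h)) \<le> norm h * p + e" by simp
  qed
qed



definition pp :: "real \<Rightarrow> real" where "pp t = (max 0 t)^2"

lemma pp_deriv: "(pp has_real_derivative (2 * max 0 t)) (at t)"
proof (cases "t = 0")
  case True
  have eq: "\<forall>\<^sub>F h in at (0::real). (pp (0 + h) - pp 0) / h = max 0 h"
    by (rule eventually_at_ball[of 1, THEN eventually_mono]) (auto simp: pp_def power2_eq_square max_def)
  have "((\<lambda>h. max 0 h) \<longlongrightarrow> max 0 (0::real)) (at 0)"
    by (intro tendsto_max tendsto_const tendsto_ident_at)
  then have "((\<lambda>h. (pp (0 + h) - pp 0) / h) \<longlongrightarrow> 0) (at 0)"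
    using tendsto_cong[OF eq] by simp
  then show ?thesis using True by (simp add: DERIV_def)
next
  case False
  show ?thesis
  proof (cases "t > 0")
    case True
    have d: "((\<lambda>t. t^2) has_real_derivative (2 * t)) (at t)" by (auto intro!: derivative_eq_intros)
    have "(pp has_real_derivative (2 * t)) (at t)"
      by (rule has_field_derivative_transform_within_open[OF d, of "{0<..}"]) (use True in \<open>auto simp: pp_def\<close>)
    then show ?thesis using True by simp
  next
    case False
    with \<open>t \<noteq> 0\<close> have tn: "t < 0" by simp
    have d: "((\<lambda>t. 0) has_real_derivative 0) (at t)" by simp
    have "(pp has_real_derivative 0) (at t)"
      by (rule has_field_derivative_transform_within_open[OF d, of "{..<0}"]) (use tn in \<open>auto simp: pp_def\<close>)
    then show ?thesis using tn by simp
  qed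
qed


lemma pp_nonneg: "pp t \<ge> 0" by (simp add: pp_def)
lemma pp_pos: "t > 0 \<Longrightarrow> pp t > 0" by (simp add: pp_def)
lemma pp_zero: "t \<le> 0 \<Longrightarrow> pp t = 0" by (simp add: pp_def)
lemma pp_cont: "continuous_on UNIV pp" unfolding pp_def[abs_def] by (intro continuous_intros)

definition psiD :: "real \<Rightarrow> real" where "psiD t = pp (4 - t) + pp (t - 1)"
definition psi :: "real \<Rightarrow> real" where "psi t = pp (4 - t) / psiD t"
definition psi' :: "real \<Rightarrow> real" where
  "psi' t = ((2 * max 0 (4 - t) * (-1)) * psiD t - pp (4 - t) * (2 * max 0 (4 - t) * (-1) + 2 * max 0 (t - 1) * 1)) / (psiD t * psiD t)"

lemma psiD_pos: "psiD t > 0"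
proof (cases "t < 4")
  case True then show ?thesis using pp_pos[of "4 - t"] pp_nonneg[of "t - 1"] by (simp add: psiD_def)
next
  case False then show ?thesis using pp_pos[of "t - 1"] pp_nonneg[of "4 - t"] by (simp add: psiD_def)
qed

lemma psi_deriv: "(psi has_real_derivative psi' t) (at t)"
proof -
  have a: "((\<lambda>t. pp (4 - t)) has_real_derivative (2 * max 0 (4 - t) * (-1))) (at t)"
    by (rule DERIV_chain2[OF pp_deriv]) (auto intro!: derivative_eq_intros)
  have b: "((\<lambda>t. pp (t - 1)) has_real_derivative (2 * max 0 (t - 1) * 1)) (at t)"
    by (rule DERIV_chain2[OF pp_deriv]) (auto intro!: derivative_eq_intros)
  have dD: "(psiD has_real_derivative (2 * max 0 (4 - t) * (-1) + 2 * max 0 (t - 1) * 1)) (at t)"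
    unfolding psiD_def[abs_def] by (rule DERIV_add[OF a b])
  show ?thesis unfolding psi_def[abs_def] psi'_def
    using DERIV_divide[OF a dD] psiD_pos[of t] by simp
qed

lemma psi'_cont: "continuous_on UNIV psi'"
proof -
  have cD: "continuous_on UNIV psiD" unfolding psiD_def[abs_def]
    by (intro continuous_intros continuous_on_compose2[OF pp_cont]) auto
  have nz1: "\<And>t. psiD t \<noteq> 0" using psiD_pos by (metis less_irrefl)
  have nz: "\<And>t. psiD t * psiD t \<noteq> 0" using nz1 by simp
  show ?thesis unfolding psi'_def[abs_def]
    by (intro continuous_intros continuous_on_compose2[OF pp_cont] cD nz) (auto simp: nz1)
qed

lemma psi_one: "t \<le> 1 \<Longrightarrow> psi t = 1"
  using pp_pos[of "4 - t"] by (simp add: psi_def psiD_def pp_zero)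
lemma psi_zero: "t \<ge> 4 \<Longrightarrow> psi t = 0"
  by (simp add: psi_def pp_zero)
lemma psi_ge0: "psi t \<ge> 0"
  using psiD_pos[of t] pp_nonneg[of "4 - t"] by (simp add: psi_def)
lemma psi_le1: "psi t \<le> 1"
  using psiD_pos[of t] pp_nonneg[of "t - 1"] by (simp add: psi_def psiD_def divide_le_eq)

definition C1 :: "('a::real_normed_vector \<Rightarrow> real) \<Rightarrow> ('a \<Rightarrow> 'a \<Rightarrow> real) \<Rightarrow> bool" where
  "C1 f f' \<longleftrightarrow> (\<forall>y. (f has_derivative f' y) (at y)) \<and> (\<forall>w. continuous_on UNIV (\<lambda>y. f' y w)) \<and> continuous_on UNIV f"

lemma C1_one_minus: "C1 f f' \<Longrightarrow> C1 (\<lambda>y. 1 - f y) (\<lambda>y w. - f' y w)"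
  unfolding C1_def by (auto intro!: derivative_eq_intros continuous_intros)

lemma C1_prod:
  assumes "finite I" "\<And>i. i \<in> I \<Longrightarrow> C1 (f i) (f' i)"
  shows "C1 (\<lambda>y. \<Prod>i\<in>I. f i y) (\<lambda>y w. \<Sum>i\<in>I. f' i y w * (\<Prod>j\<in>I - {i}. f j y))"
  unfolding C1_def
proof (intro conjI allI)
  fix y show "((\<lambda>y. \<Prod>i\<in>I. f i y) has_derivative (\<lambda>w. \<Sum>i\<in>I. f' i y w * (\<Prod>j\<in>I - {i}. f j y))) (at y)"
    using assms unfolding C1_def by (intro has_derivative_prod) auto
next
  fix w show "continuous_on UNIV (\<lambda>y. \<Sum>i\<in>I. f' i y w * (\<Prod>j\<in>I - {i}. f j y))"
    using assms unfolding C1_def by (intro continuous_intros) auto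
next
  show "continuous_on UNIV (\<lambda>y. \<Prod>i\<in>I. f i y)"
    using assms unfolding C1_def by (intro continuous_intros) auto
qed

lemma C1_bump:
  fixes c :: "'a::real_inner"
  assumes r: "r > 0"
  shows "C1 (\<lambda>y. psi ((y - c) \<bullet> (y - c) / r^2)) (\<lambda>y w. psi' ((y - c) \<bullet> (y - c) / r^2) * (2 * ((y - c) \<bullet> w) / r^2))"
  unfolding C1_def
proof (intro conjI allI)
  fix y :: 'a
  have q: "((\<lambda>y. (y - c) \<bullet> (y - c) / r^2) has_derivative (\<lambda>w. 2 * ((y - c) \<bullet> w) / r^2)) (at y)"
    using r by (auto intro!: derivative_eq_intros ext simp: inner_commute divide_simps power2_eq_square)
  have p: "(psi has_derivative (*) (psi' ((y - c) \<bullet> (y - c) / r^2))) (at ((y - c) \<bullet> (y - c) / r^2))"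
    using psi_deriv unfolding has_field_derivative_def by blast
  from has_derivative_compose[OF q p]
  show "((\<lambda>y. psi ((y - c) \<bullet> (y - c) / r^2)) has_derivative (\<lambda>w. psi' ((y - c) \<bullet> (y - c) / r^2) * (2 * ((y - c) \<bullet> w) / r^2))) (at y)"
    by simp
next
  fix w :: 'a
  have r2: "r^2 \<noteq> 0" using r by simp
  have cq: "continuous_on UNIV (\<lambda>y. (y - c) \<bullet> (y - c) / r^2)"
    by (intro continuous_on_divide continuous_on_inner continuous_on_diff continuous_on_id continuous_on_const) (use r2 in auto)
  have c1: "continuous_on UNIV (\<lambda>y. psi' ((y - c) \<bullet> (y - c) / r^2))"
    using continuous_on_compose2[OF psi'_cont cq] by simp
  have c2: "continuous_on UNIV (\<lambda>y. 2 * ((y - c) \<bullet> w) / r^2)"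
    by (intro continuous_on_divide continuous_on_mult continuous_on_inner continuous_on_diff continuous_on_id continuous_on_const) (use r2 in auto)
  show "continuous_on UNIV (\<lambda>y. psi' ((y - c) \<bullet> (y - c) / r^2) * (2 * ((y - c) \<bullet> w) / r^2))"
    by (rule continuous_on_mult[OF c1 c2])
next
  have r2: "r^2 \<noteq> 0" using r by simp
  have cq: "continuous_on UNIV (\<lambda>y. (y - c) \<bullet> (y - c) / r^2)"
    by (intro continuous_on_divide continuous_on_inner continuous_on_diff continuous_on_id continuous_on_const) (use r2 in auto)
  have "continuous_on UNIV psi"
    using psi_deriv by (meson DERIV_isCont continuous_at_imp_continuous_on)
  from continuous_on_compose2[OF this cq]
  show "continuous_on UNIV (\<lambda>y. psi ((y - c) \<bullet> (y - c) / r^2))" by simp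
qed



lemma smooth_approx:
  fixes E :: "'a::euclidean_space set"
  assumes E: "open E" "bounded E" and e: "e > 0"
  obtains u f' D where "C1 u f'" "\<And>x. 0 \<le> u x" "\<And>x. u x \<le> 1" "\<And>x. x \<notin> E \<Longrightarrow> u x = 0"
    "D \<in> sets borel" "emeasure lborel D < ennreal e" "\<And>x. \<bar>indicator E x - u x\<bar> \<le> indicator D x"
proof -
  have El: "E \<in> sets lebesgue" using E(1) by simp
  obtain C where C: "closed C" "C \<subseteq> E" "E - C \<in> lmeasurable" "emeasure lebesgue (E - C) < ennreal e"
    using sets_lebesgue_inner_closed[OF El e] by blast
  define D where "D = E - C"
  have Dm: "D \<in> sets borel" unfolding D_def using E(1) C(1) by auto
  have Dmeas: "emeasure lborel D < ennreal e"
    using C(4) Dm unfolding D_def by (simp add: emeasure_completion main_part_sets)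
  have Cc: "compact C" using C(1,2) E(2) by (meson bounded_subset compact_eq_bounded_closed)
  have "\<forall>x\<in>C. \<exists>r>0. ball x (2 * r) \<subseteq> E"
  proof
    fix x assume "x \<in> C"
    then have "x \<in> E" using C(2) by blast
    then obtain \<epsilon> where "\<epsilon> > 0" "ball x \<epsilon> \<subseteq> E" using E(1) open_contains_ball by blast
    then show "\<exists>r>0. ball x (2 * r) \<subseteq> E" by (intro exI[of _ "\<epsilon>/2"]) auto
  qed
  then obtain rr where rr: "\<And>x. x \<in> C \<Longrightarrow> rr x > 0" "\<And>x. x \<in> C \<Longrightarrow> ball x (2 * rr x) \<subseteq> E"
    by metis
  obtain T where T: "T \<subseteq> C" "finite T" "C \<subseteq> (\<Union>x\<in>T. ball x (rr x))"
  proof -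
    have "C \<subseteq> (\<Union>x\<in>C. ball x (rr x))" using rr(1) by force
    from compactE_image[OF Cc _ this] show ?thesis using that by auto
  qed
  define \<beta> where "\<beta> x y = psi ((y - x) \<bullet> (y - x) / (rr x)^2)" for x y :: 'a
  define \<beta>' where "\<beta>' x y w = psi' ((y - x) \<bullet> (y - x) / (rr x)^2) * (2 * ((y - x) \<bullet> w) / (rr x)^2)" for x y w :: 'a
  define u where "u y = 1 - (\<Prod>x\<in>T. 1 - \<beta> x y)" for y
  define f' where "f' y w = - (\<Sum>i\<in>T. - \<beta>' i y w * (\<Prod>j\<in>T - {i}. 1 - \<beta> j y))" for y w
  have C1\<beta>: "C1 (\<beta> x) (\<beta>' x)" if "x \<in> T" for x
    unfolding \<beta>_def[abs_def] \<beta>'_def[abs_def] using C1_bump[OF rr(1), of x] that T(1) by auto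
  have C1u: "C1 u f'"
    unfolding u_def[abs_def] f'_def[abs_def]
    by (rule C1_one_minus, rule C1_prod[OF T(2)], rule C1_one_minus, rule C1\<beta>)
  have fac0: "0 \<le> 1 - \<beta> x y" "1 - \<beta> x y \<le> 1" for x y
    unfolding \<beta>_def using psi_ge0 psi_le1 by (auto simp: algebra_simps)
  have p01: "0 \<le> (\<Prod>x\<in>T. 1 - \<beta> x y)" "(\<Prod>x\<in>T. 1 - \<beta> x y) \<le> 1" for y
    using fac0 by (auto intro: prod_nonneg prod_le_1)
  have u0: "0 \<le> u y" and u1: "u y \<le> 1" for y using p01[of y] by (auto simp: u_def)
  have uE: "u y = 0" if "y \<notin> E" for y
  proof -
    have "\<beta> x y = 0" if x: "x \<in> T" for x
    proof -
      have xC: "x \<in> C" using x T(1) by blast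
      have "y \<notin> ball x (2 * rr x)" using rr(2)[OF xC] \<open>y \<notin> E\<close> by blast
      then have "2 * rr x \<le> norm (y - x)" by (simp add: dist_norm norm_minus_commute)
      then have "(2 * rr x)^2 \<le> (norm (y - x))^2" using rr(1)[OF xC] by (intro power_mono) auto
      then have "4 * (rr x)^2 \<le> (y - x) \<bullet> (y - x)" by (simp add: power2_norm_eq_inner power_mult_distrib)
      then have "4 \<le> (y - x) \<bullet> (y - x) / (rr x)^2" using rr(1)[OF xC] by (simp add: le_divide_eq)
      then show ?thesis unfolding \<beta>_def by (rule psi_zero)
    qed
    then show ?thesis by (simp add: u_def)
  qed
  have uC: "u y = 1" if "y \<in> C" for y
  proof -
    obtain x where x: "x \<in> T" "y \<in> ball x (rr x)" using T(3) \<open>y \<in> C\<close> by blast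
    have xC: "x \<in> C" using x T(1) by blast
    have "norm (y - x) < rr x" using x(2) by (simp add: dist_norm norm_minus_commute)
    then have "(norm (y - x))^2 < (rr x)^2" using rr(1)[OF xC] by (intro power_strict_mono) auto
    then have "(y - x) \<bullet> (y - x) / (rr x)^2 \<le> 1" using rr(1)[OF xC] by (simp add: power2_norm_eq_inner divide_le_eq)
    then have "\<beta> x y = 1" unfolding \<beta>_def by (rule psi_one)
    then have "(\<Prod>x\<in>T. 1 - \<beta> x y) = 0" using x(1) T(2) by (intro prod_zero) auto
    then show ?thesis by (simp add: u_def)
  qed
  have ind: "\<bar>indicator E y - u y\<bar> \<le> indicator D y" for y
  proof (cases "y \<in> C")
    case True then show ?thesis using uC C(2) by (auto simp: indicator_def D_def)
  next
    case False
    show ?thesis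
    proof (cases "y \<in> E")
      case True then show ?thesis using False u0[of y] u1[of y] by (auto simp: indicator_def D_def)
    next
      case False then show ?thesis using uE by (auto simp: indicator_def D_def)
    qed
  qed
  show ?thesis by (rule that[OF C1u u0 u1 uE Dm Dmeas ind])
qed



lemma shift_bound:
  fixes E :: "'a::euclidean_space set"
  assumes E: "open E" "bounded E" and per: "perimeter E \<le> ereal p"
  shows "(\<integral>\<^sup>+ x. indicator E x * indicator (- E) (x + h) \<partial>lborel) \<le> ennreal (norm h * p)"
proof (rule ennreal_le_epsilon)
  fix e :: real assume e: "e > 0"
  have Em[measurable]: "E \<in> sets borel" using E(1) by simp
  have p0: "p \<ge> 0" using perimeter_nonneg[of E] per by (metis ereal_less_eq(5) order_trans)
  obtain u f' D where u: "C1 u f'" "\<And>x. 0 \<le> u x" "\<And>x. u x \<le> 1" "\<And>x. x \<notin> E \<Longrightarrow> u x = 0"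
    "D \<in> sets borel" "emeasure lborel D < ennreal e" "\<And>x. \<bar>indicator E x - u x\<bar> \<le> indicator D x"
    using smooth_approx[OF E e] by blast
  have du: "\<And>y. (u has_derivative f' y) (at y)" and cf: "\<And>w. continuous_on UNIV (\<lambda>y. f' y w)"
    and uc: "continuous_on UNIV u" using u(1) unfolding C1_def by auto
  have um[measurable]: "u \<in> borel_measurable borel" using uc by (rule borel_measurable_continuous_onI)
  have Dm[measurable]: "D \<in> sets borel" by (rule u(5))
  have ush: "continuous_on UNIV (\<lambda>x. u (x - h))"
    by (intro continuous_on_compose2[OF uc] continuous_intros) auto
  have db: "(LINT x:E|lborel. u x - u (x - h)) \<le> norm h * p"
    by (rule diff_bound[OF du cf u(2) u(3) u(4) E(2) Em per])
  have si1: "set_integrable lborel E u" by (rule set_integrable_cont[OF uc E(2) Em])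
  have si2: "set_integrable lborel E (\<lambda>x. u (x - h))" by (rule set_integrable_cont[OF ush E(2) Em])
  define I1 where "I1 = (LINT x:E|lborel. u x)"
  define I2 where "I2 = (LINT x:E|lborel. u (x - h))"
  have I12: "I1 \<le> norm h * p + I2"
    using db set_integral_diff(2)[OF si1 si2] unfolding I1_def I2_def by simp
  have I2pos: "I2 \<ge> 0" unfolding I2_def set_lebesgue_integral_def using u(2)
    by (intro integral_nonneg_AE AE_I2) (auto simp: indicator_def)
  have ie: "ennreal (indicator X x * c) = (indicator X x :: ennreal) * ennreal c" for X x and c :: real
    by (simp add: indicator_def)
  have n1: "(\<integral>\<^sup>+ x. (indicator E x :: ennreal) * ennreal (u x) \<partial>lborel) = ennreal I1"
  proof -
    have "(\<integral>\<^sup>+ x. ennreal (indicator E x * u x) \<partial>lborel) = ennreal (\<integral>x. indicator E x * u x \<partial>lborel)"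
      using si1 u(2) unfolding set_integrable_def by (intro nn_integral_eq_integral) auto
    then show ?thesis unfolding I1_def set_lebesgue_integral_def by (simp add: ie)
  qed
  have n2: "(\<integral>\<^sup>+ x. (indicator E x :: ennreal) * ennreal (u (x - h)) \<partial>lborel) = ennreal I2"
  proof -
    have "(\<integral>\<^sup>+ x. ennreal (indicator E x * u (x - h)) \<partial>lborel) = ennreal (\<integral>x. indicator E x * u (x - h) \<partial>lborel)"
      using si2 u(2) unfolding set_integrable_def by (intro nn_integral_eq_integral) auto
    then show ?thesis unfolding I2_def set_lebesgue_integral_def by (simp add: ie)
  qed
  have tr: "(\<integral>\<^sup>+ x. (indicator E (x + h) :: ennreal) * ennreal (u x) \<partial>lborel) = (\<integral>\<^sup>+ x. (indicator E x :: ennreal) * ennreal (u (x - h)) \<partial>lborel)"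
    using nn_integral_translation[of "\<lambda>y. indicator E y * ennreal (u (y - h))" h] by simp
  have pt: "indicator E x * indicator (- E) (x + h) + indicator E (x + h) * ennreal (u x)
      \<le> indicator E x * ennreal (u x) + indicator D x" for x
  proof -
    have r: "indicator E x * indicator (- E) (x + h) + indicator E (x + h) * u x
        \<le> indicator E x * u x + (indicator D x :: real)"
      using u(2)[of x] u(3)[of x] u(7)[of x] by (auto simp: indicator_def split: if_splits)
    have e1: "(indicator E x * indicator (- E) (x + h) + indicator E (x + h) * ennreal (u x) :: ennreal)
        = ennreal (indicator E x * indicator (- E) (x + h) + indicator E (x + h) * u x)"
      using u(2)[of x] by (auto simp: indicator_def ennreal_plus)
    have e2: "(indicator E x * ennreal (u x) + indicator D x :: ennreal) = ennreal (indicator E x * u x + indicator D x)"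
      using u(2)[of x] by (auto simp: indicator_def ennreal_plus)
    show ?thesis unfolding e1 e2 using r by (rule ennreal_leI)
  qed
  define A where "A = (\<integral>\<^sup>+ x. indicator E x * indicator (- E) (x + h) \<partial>lborel)"
  have "A + ennreal I2 = (\<integral>\<^sup>+ x. indicator E x * indicator (- E) (x + h) + indicator E (x + h) * ennreal (u x) \<partial>lborel)"
    unfolding A_def n2[symmetric] tr[symmetric] by (subst nn_integral_add) auto
  also have "\<dots> \<le> (\<integral>\<^sup>+ x. indicator E x * ennreal (u x) + indicator D x \<partial>lborel)"
    by (intro nn_integral_mono pt)
  also have "\<dots> = ennreal I1 + emeasure lborel D"
    by (subst nn_integral_add) (auto simp: n1[symmetric])
  also have "\<dots> \<le> ennreal (norm h * p) + ennreal I2 + ennreal e"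
  proof -
    have "ennreal I1 \<le> ennreal (norm h * p + I2)" using I12 by (rule ennreal_leI)
    also have "\<dots> = ennreal (norm h * p) + ennreal I2" using I2pos p0 by (simp add: ennreal_plus)
    finally show ?thesis using u(6) by (intro add_mono) auto
  qed
  finally have "ennreal I2 + A \<le> ennreal I2 + (ennreal (norm h * p) + ennreal e)"
    by (simp add: ac_simps)
  then show "A \<le> ennreal (norm h * p) + ennreal e"
    by (simp add: ennreal_add_left_cancel_le)
qed

lemma frac_perimeter_finite:
  fixes E :: "'a::euclidean_space set"
  assumes E: "open E" "bounded E" and per: "perimeter E < \<infinity>" and s: "0 < s" "s < 1"
  shows "frac_perimeter s E < \<infinity>"
proof -
  have Em[measurable]: "E \<in> sets borel" using E(1) by simp
  define p where "p = real_of_ereal (perimeter E)"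
  have pe: "perimeter E = ereal p"
    using perimeter_nonneg[of E] per unfolding p_def by (cases "perimeter E") auto
  have p0: "p \<ge> 0" using perimeter_nonneg[of E] pe by simp
  have Ef: "emeasure lborel E < \<infinity>"
  proof -
    obtain r0 where "\<forall>x\<in>E. norm x \<le> r0" using E(2) unfolding bounded_iff by blast
    then have "E \<subseteq> cball 0 r0" by (auto simp: dist_norm)
    then have "emeasure lborel E \<le> emeasure lborel (cball (0::'a) r0)" by (intro emeasure_mono) auto
    then show ?thesis using emeasure_lborel_cball_finite[of "0::'a" r0] by (meson le_less_trans)
  qed
  define M where "M = enn2real (emeasure lborel E)"
  have M: "emeasure lborel E = ennreal M" "M \<ge> 0" using Ef unfolding M_def
    by (auto simp: ennreal_enn2real_if top.not_eq_extremum)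
  define g where "g h = (\<integral>\<^sup>+ x. indicator E x * indicator (- E) (x + h) \<partial>lborel)" for h :: 'a
  have gm[measurable]: "g \<in> borel_measurable borel" unfolding g_def by measurable
  have gM: "g h \<le> ennreal M" for h
  proof -
    have "g h \<le> (\<integral>\<^sup>+ x. indicator E x \<partial>lborel)" unfolding g_def
      by (intro nn_integral_mono) (auto simp: indicator_def)
    then show ?thesis using M by simp
  qed
  have gC: "g h \<le> ennreal (p * norm h)" for h
    unfolding g_def using shift_bound[OF E, of p h] pe by (simp add: mult.commute)
  have "frac_perimeter s E = (\<integral>\<^sup>+ h. ennreal (norm h powr (- (real DIM('a) + s))) * g h \<partial>lborel)"
    unfolding g_def by (rule frac_shift_repr[OF Em])
  also have "\<dots> < \<infinity>" by (rule kernel_finite[OF gm s M(2) p0 gM gC])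
  finally show ?thesis .
qed



theorem theorem3p8:
  fixes T0 S0 :: "(real^'n) set"
    and lam :: real and a b :: nat
    and R :: "nat \<Rightarrow> nat \<Rightarrow> real^'n^'n"
    and xs :: "nat \<Rightarrow> nat \<Rightarrow> real^'n"
    and F :: "nat \<Rightarrow> nat \<Rightarrow> real^'n \<Rightarrow> real^'n"
    and T :: "(real^'n) set"
  assumes T0_open: "open T0" and T0_bounded: "bounded T0" and T0_ne: "T0 \<noteq> {}"
    and T0_per: "perimeter T0 < \<infinity>"
    and lam: "lam > 1" and a_pos: "a \<ge> 1"
    and rot: "\<And>k i. 1 \<le> k \<Longrightarrow> 1 \<le> i \<Longrightarrow> i \<le> a * b ^ (k - 1) \<Longrightarrow>
                 orthogonal_matrix (R k i) \<and> det (R k i) = 1"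
    and F_def: "\<And>k i x. F k i x = R k i *v (inverse (lam ^ k) *\<^sub>R x) + xs k i"
    and disj: "\<And>k i h j. 1 \<le> k \<Longrightarrow> 1 \<le> i \<Longrightarrow> i \<le> a * b ^ (k - 1) \<Longrightarrow>
                 1 \<le> h \<Longrightarrow> 1 \<le> j \<Longrightarrow> j \<le> a * b ^ (h - 1) \<Longrightarrow> (k, i) \<noteq> (h, j) \<Longrightarrow>
                 emeasure lebesgue (F k i ` T0 \<inter> F h j ` T0) = 0"
    and T_def: "T = (\<Union>k\<in>{1..}. \<Union>i\<in>{1..a * b ^ (k - 1)}. F k i ` T0)"
    and dimrange: "real CARD('n) - 1 < ln (real b) / ln lam"
                  "ln (real b) / ln lam < real CARD('n)"
    and S0_sub: "S0 \<subseteq> - T" and S0_meas: "S0 \<in> sets lebesgue"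
    and S0_pos: "emeasure lebesgue S0 > 0"
    and S0_img: "\<And>k i. 1 \<le> k \<Longrightarrow> 1 \<le> i \<Longrightarrow> i \<le> a * b ^ (k - 1) \<Longrightarrow>
                 F k i ` S0 \<subseteq> - T"
  shows "(\<forall>s. 0 < s \<and> s < real CARD('n) - ln (real b) / ln lam \<longrightarrow>
              frac_perimeter s T < \<infinity>)
       \<and> (\<forall>s. real CARD('n) - ln (real b) / ln lam \<le> s \<and> s < 1 \<longrightarrow>
              frac_perimeter s T = \<infinity>)
       \<and> frac_dim T = ln (real b) / ln lam"
proof -
  define n where "n = real CARD('n)"
  define d where "d = ln (real b) / ln lam"
  define \<rho> where "\<rho> k = inverse (lam ^ k)" for k :: nat
  define I where "I k = (if 1 \<le> k then {1..a * b ^ (k - 1)} else {})" for k :: nat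
  have lnlam: "ln lam > 0" using lam by simp
  have n1: "n \<ge> 1" unfolding n_def by simp
  have d1: "n - 1 < d" "d < n" using dimrange unfolding n_def d_def by auto
  have lnb: "ln (real b) > 0" using d1 n1 lnlam unfolding d_def
    by (smt (verit) divide_nonpos_pos)
  have b1: "real b > 1"
  proof (rule ccontr)
    assume "\<not> real b > 1"
    then have "ln (real b) \<le> 0" by (cases "b = 0") (auto simp: ln_le_zero_iff)
    with lnb show False by simp
  qed
  have rho_pos: "\<rho> k > 0" for k using lam by (simp add: \<rho>_def)
  have Fs: "F k i = simil (R k i) (\<rho> k) (xs k i)" for k i
    by (auto simp: F_def simil_def \<rho>_def)
  have valid: "orthogonal_matrix (R k i)" if "i \<in> I k" for k i
    using rot that by (auto simp: I_def split: if_splits)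
  have T0m[measurable]: "T0 \<in> sets borel" using T0_open by auto
  have Tsets: "F k i ` X \<in> sets borel" if "i \<in> I k" "X \<in> sets borel" for k i X
    unfolding Fs using simil_sets[OF valid[OF that(1)] rho_pos that(2)] .
  have TU: "T = (\<Union>k. \<Union>i\<in>I k. F k i ` T0)"
  proof (intro equalityI subsetI)
    fix x assume "x \<in> T"
    then obtain k i where ki: "k \<in> {1..}" "i \<in> {1..a*b^(k-1)}" "x \<in> F k i ` T0" unfolding T_def by blast
    then have "i \<in> I k" by (simp add: I_def)
    with ki(3) show "x \<in> (\<Union>k. \<Union>i\<in>I k. F k i ` T0)" by blast
  next
    fix x assume "x \<in> (\<Union>k. \<Union>i\<in>I k. F k i ` T0)"
    then obtain k i where ki: "i \<in> I k" "x \<in> F k i ` T0" by blast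
    then have "k \<in> {1..}" "i \<in> {1..a*b^(k-1)}" by (auto simp: I_def split: if_splits)
    with ki(2) show "x \<in> T" unfolding T_def by blast
  qed
  have Tm[measurable]: "T \<in> sets borel"
    unfolding TU using Tsets T0m by (intro sets.countable_UN sets.finite_UN) (auto simp: I_def)
  have cardI: "card (I k) = (if 1 \<le> k then a * b ^ (k - 1) else 0)" for k
    by (simp add: I_def)
  have scale: "Lint s (F k i ` X) (F k i ` Y) = ennreal (\<rho> k powr (n - s)) * Lint s X Y"
    if "i \<in> I k" "X \<in> sets borel" "Y \<in> sets borel" for s k i X Y
    unfolding Fs n_def using Lint_similar[OF valid[OF that(1)] rho_pos that(2,3)] .
  have rho_powr: "\<rho> k powr t = (lam powr (-t)) ^ k" for k t
    using lam by (simp add: \<rho>_def powr_realpow[symmetric] powr_powr powr_minus_divide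
        powr_divide inverse_eq_divide powr_mult[symmetric] mult.commute)
  have upper: "frac_perimeter s T < \<infinity>" if s: "0 < s" "s < n - d" for s
  proof -
    have s1: "s < 1" using s d1 by simp
    have P0: "frac_perimeter s T0 < \<infinity>"
      by (rule frac_perimeter_finite[OF T0_open T0_bounded T0_per s(1) s1])
    then obtain p where p: "frac_perimeter s T0 = ennreal p" "p \<ge> 0"
      by (metis ennreal_cases infinity_ennreal_def less_irrefl) 
    define r where "r = real b * lam powr (-(n - s))"
    have r0: "r \<ge> 0" unfolding r_def by simp
    have r1: "r < 1"
    proof -
      have "ln (real b) < (n - s) * ln lam" using s lnlam unfolding d_def by (simp add: field_simps)
      then have "real b < exp ((n - s) * ln lam)" using b1 by (metis exp_ln less_trans zero_less_one exp_less_cancel_iff)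
      then have "real b < lam powr (n - s)" using lam by (simp add: powr_def)
      moreover have e: "real b * lam powr (-(n-s)) = real b / lam powr (n-s)"
        by (metis divide_inverse powr_minus)
      ultimately show ?thesis unfolding r_def e using lam by (simp add: divide_less_eq)
    qed
    define q where "q k = real (card (I k)) * (\<rho> k powr (n - s) * p)" for k
    have q0: "q k \<ge> 0" for k using p by (simp add: q_def)
    have qle: "q k \<le> (real a * p) * r ^ k" for k
    proof (cases "1 \<le> k")
      case True
      have "real (b ^ (k - 1)) \<le> real b ^ k" using b1 by (simp add: power_increasing)
      then have "real a * real (b ^ (k - 1)) * (lam powr (-(n - s))) ^ k * p \<le> real a * real b ^ k * (lam powr (-(n - s))) ^ k * p"
        using p by (intro mult_right_mono mult_left_mono) auto
      then show ?thesis using True unfolding q_def cardI r_def rho_powr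
        by (simp add: power_mult_distrib mult_ac)
    qed (use p r0 in \<open>simp add: q_def cardI\<close>)
    have summ: "summable q"
      by (rule summable_comparison_test'[where g="\<lambda>k. (real a * p) * r ^ k"])
         (use q0 qle r0 r1 in \<open>auto intro!: summable_mult summable_geometric\<close>)
    have TU': "T = (\<Union>k. \<Union>i\<in>I k. (if i \<in> I k then F k i ` T0 else {}))"
      unfolding TU by auto
    have "frac_perimeter s T \<le> (\<Sum>k. \<Sum>i\<in>I k. frac_perimeter s (if i \<in> I k then F k i ` T0 else {}))"
      by (rule frac_union_le[OF _ _ TU']) (auto simp: I_def intro: Tsets)
    also have "\<dots> = (\<Sum>k. \<Sum>i\<in>I k. frac_perimeter s (F k i ` T0))"
      by (intro suminf_cong sum.cong) auto
    also have "\<dots> = (\<Sum>k. ennreal (q k))"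
    proof (intro suminf_cong)
      fix k
      have "(\<Sum>i\<in>I k. frac_perimeter s (F k i ` T0)) = (\<Sum>i\<in>I k. ennreal (\<rho> k powr (n - s) * p))"
      proof (intro sum.cong refl)
        fix i assume i: "i \<in> I k"
        have "frac_perimeter s (F k i ` T0) = Lint s (F k i ` T0) (F k i ` (- T0))"
          unfolding frac_perimeter_Lint Fs using simil_props(5)[OF valid[OF i] rho_pos] by simp
        also have "\<dots> = ennreal (\<rho> k powr (n - s)) * frac_perimeter s T0"
          using scale[OF i] by (simp add: frac_perimeter_Lint)
        finally show "frac_perimeter s (F k i ` T0) = ennreal (\<rho> k powr (n - s) * p)"
          using p rho_pos by (simp add: ennreal_mult)
      qed
      also have "\<dots> = ennreal (q k)"
        unfolding q_def using p rho_pos by (simp add: ennreal_of_nat_eq_real_of_nat ennreal_mult)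
      finally show "(\<Sum>i\<in>I k. frac_perimeter s (F k i ` T0)) = ennreal (q k)" .
    qed
    also have "\<dots> < \<infinity>" using summ q0
      by (metis ennreal_suminf_neq_top infinity_ennreal_def top.not_eq_extremum)
    finally show ?thesis .
  qed
  have lebB: "emeasure lebesgue X = emeasure lborel X" if "X \<in> sets borel" for X
    using that by (simp add: emeasure_completion main_part_sets)
  obtain S1 where S1: "closed S1" "S1 \<subseteq> S0" "emeasure lborel S1 > 0"
  proof -
    define e where "e = (if emeasure lebesgue S0 = \<infinity> then 1 else enn2real (emeasure lebesgue S0))"
    have e0: "e > 0" using S0_pos unfolding e_def
      by (auto simp: enn2real_positive_iff top.not_eq_extremum)
    have eS: "ennreal e \<le> emeasure lebesgue S0" unfolding e_def by (cases "emeasure lebesgue S0") auto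
    obtain C where C: "closed C" "C \<subseteq> S0" "S0 - C \<in> lmeasurable" "emeasure lebesgue (S0 - C) < ennreal e"
      using sets_lebesgue_inner_closed[OF S0_meas e0] by blast
    have Cm: "C \<in> sets borel" using C(1) by auto
    have "emeasure lebesgue C > 0"
    proof (rule ccontr)
      assume "\<not> ?thesis"
      then have C0: "emeasure lebesgue C = 0" by (simp add: zero_less_iff_neq_zero)
      have eqS: "S0 = C \<union> (S0 - C)" using C(2) by blast
      have Cl: "C \<in> sets lebesgue" using Cm by simp
      have Dl: "S0 - C \<in> sets lebesgue" using C(3) by (simp add: fmeasurableD)
      have "emeasure lebesgue S0 \<le> emeasure lebesgue C + emeasure lebesgue (S0 - C)"
        by (subst eqS) (rule emeasure_subadditive[OF Cl Dl])
      also have "\<dots> < ennreal e" using C0 C(4) by simp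
      finally show False using eS by simp
    qed
    then show ?thesis using that[OF C(1,2)] lebB[OF Cm] by simp
  qed
  have S1m[measurable]: "S1 \<in> sets borel" using S1(1) by auto
  have T0pos: "emeasure lborel T0 > 0"
  proof -
    obtain x where "x \<in> T0" using T0_ne by blast
    then obtain r where r: "r > 0" "ball x r \<subseteq> T0" using T0_open open_contains_ball by blast
    have "0 < emeasure lborel (ball x r)" using r by (simp add: emeasure_ball)
    also have "\<dots> \<le> emeasure lborel T0" using r by (intro emeasure_mono) auto
    finally show ?thesis .
  qed
  have L0: "Lint s T0 S1 > 0" for s by (rule Lint_pos[OF T0m S1m T0pos S1(3)])
  have lower: "frac_perimeter s T = \<infinity>" if s: "n - d \<le> s" "s < 1" for s
  proof -
    let ?K = "\<lambda>x y. ennreal (dist x y powr (- (real DIM(real^'n) + s)))"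
    define f where "f x = (\<integral>\<^sup>+ y. indicator (- T) y * ?K x y \<partial>lborel)" for x
    define A where "A p = F (fst p) (snd p) ` T0" for p
    define B where "B p = F (fst p) (snd p) ` S1" for p
    define c0 where "c0 = real a * lam powr (-(n - s))"
    have c0: "c0 > 0" unfolding c0_def using a_pos lam by simp
    obtain l where l: "l > 0" "ennreal l \<le> Lint s T0 S1"
    proof (cases "Lint s T0 S1 = \<infinity>")
      case True then show ?thesis using that[of 1] by simp
    next
      case False
      then show ?thesis using that[of "enn2real (Lint s T0 S1)"] L0[of s]
        by (simp add: enn2real_positive_iff top.not_eq_extremum)
    qed
    have rb: "real b * lam powr (-(n - s)) \<ge> 1"
    proof -
      have "ln (real b) \<ge> (n - s) * ln lam" using s lnlam unfolding d_def by (simp add: field_simps)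
      then have "real b \<ge> exp ((n - s) * ln lam)" using b1
        by (metis exp_ln exp_le_cancel_iff less_trans zero_less_one)
      then have "real b \<ge> lam powr (n - s)" using lam by (simp add: powr_def)
      moreover have e: "real b * lam powr (-(n-s)) = real b / lam powr (n-s)"
        by (metis divide_inverse powr_minus)
      ultimately show ?thesis unfolding e using lam by (simp add: le_divide_eq)
    qed
    have big: "ennreal (real N * c0 * l) \<le> frac_perimeter s T" for N
    proof -
      define J where "J = Sigma {1..N} I"
      have finJ: "finite J" unfolding J_def by (auto simp: I_def)
      have JI: "p \<in> J \<Longrightarrow> snd p \<in> I (fst p)" for p by (auto simp: J_def)
      have Am[measurable]: "p \<in> J \<Longrightarrow> A p \<in> sets borel" for p
        unfolding A_def using Tsets[OF JI T0m] by simp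
      have Bm[measurable]: "p \<in> J \<Longrightarrow> B p \<in> sets borel" for p
        unfolding B_def using Tsets[OF JI S1m] by simp
      have AT: "p \<in> J \<Longrightarrow> A p \<subseteq> T" for p unfolding A_def TU using JI by blast
      have BT: "p \<in> J \<Longrightarrow> B p \<subseteq> - T" for p
        unfolding B_def using JI S1(2) S0_img by (fastforce simp: I_def split: if_splits)
      have AE1: "AE x in lborel. \<forall>p\<in>J. \<forall>q\<in>J. p \<noteq> q \<longrightarrow> x \<notin> A p \<inter> A q"
      proof (intro AE_finite_allI finJ)
        fix p q assume pq: "p \<in> J" "q \<in> J"
        show "AE x in lborel. p \<noteq> q \<longrightarrow> x \<notin> A p \<inter> A q"
        proof (cases "p = q")
          case False
          have "emeasure lborel (A p \<inter> A q) = 0"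
            using disj[of "fst p" "snd p" "fst q" "snd q"] JI[OF pq(1)] JI[OF pq(2)] False pq
              lebB[of "A p \<inter> A q"] Am[OF pq(1)] Am[OF pq(2)]
            by (cases p, cases q) (auto simp: A_def I_def split: if_splits)
          then have "A p \<inter> A q \<in> null_sets lborel" using Am[OF pq(1)] Am[OF pq(2)] by auto
          then show ?thesis by (rule AE_mp[OF AE_not_in]) auto
        qed simp
      qed
      have AE2: "AE x in lborel. (\<Sum>p\<in>J. indicator (A p) x) \<le> (indicator T x :: ennreal)"
        using AE1
      proof (rule AE_mp, intro AE_I2 impI)
        fix x assume H: "\<forall>p\<in>J. \<forall>q\<in>J. p \<noteq> q \<longrightarrow> x \<notin> A p \<inter> A q"
        show "(\<Sum>p\<in>J. indicator (A p) x) \<le> (indicator T x :: ennreal)"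
        proof (cases "\<exists>p\<in>J. x \<in> A p")
          case False then show ?thesis by (simp add: indicator_def)
        next
          case True
          then obtain p0 where p0: "p0 \<in> J" "x \<in> A p0" by blast
          have "(\<Sum>p\<in>J. indicator (A p) x) = (indicator (A p0) x :: ennreal) + (\<Sum>p\<in>J - {p0}. indicator (A p) x)"
            using finJ p0(1) by (simp add: sum.remove)
          also have "(\<Sum>p\<in>J - {p0}. indicator (A p) x :: ennreal) = 0"
            using H p0 by (intro sum.neutral) (auto simp: indicator_def)
          moreover have "x \<in> T" using p0 AT by blast
          ultimately show ?thesis using p0 by (simp add: indicator_def)
        qed
      qed
      have fm[measurable]: "f \<in> borel_measurable borel" unfolding f_def by measurable
      have "(\<Sum>p\<in>J. Lint s (A p) (B p)) \<le> (\<Sum>p\<in>J. \<integral>\<^sup>+ x. indicator (A p) x * f x \<partial>lborel)"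
      proof (intro sum_mono)
        fix p assume p: "p \<in> J"
        show "Lint s (A p) (B p) \<le> (\<integral>\<^sup>+ x. indicator (A p) x * f x \<partial>lborel)"
          unfolding Lint_def f_def using BT[OF p]
          by (intro nn_integral_mono mult_left_mono) (auto simp: indicator_def)
      qed
      also have "\<dots> = (\<integral>\<^sup>+ x. (\<Sum>p\<in>J. indicator (A p) x) * f x \<partial>lborel)"
        by (subst nn_integral_sum[symmetric]) (auto simp: sum_distrib_right)
      also have "\<dots> \<le> (\<integral>\<^sup>+ x. indicator T x * f x \<partial>lborel)"
        using AE2 by (intro nn_integral_mono_AE, elim AE_mp) (rule AE_I2, auto intro: mult_right_mono)
      also have "\<dots> = frac_perimeter s T" unfolding frac_perimeter_def f_def by simp
      finally have up: "(\<Sum>p\<in>J. Lint s (A p) (B p)) \<le> frac_perimeter s T" .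
      have "(\<Sum>p\<in>J. Lint s (A p) (B p)) = (\<Sum>p\<in>J. ennreal (\<rho> (fst p) powr (n - s)) * Lint s T0 S1)"
        unfolding A_def B_def using scale[OF JI T0m S1m] by (intro sum.cong) auto
      also have "\<dots> \<ge> (\<Sum>p\<in>J. ennreal (\<rho> (fst p) powr (n - s) * l))"
        using l by (intro sum_mono) (auto simp: ennreal_mult intro!: mult_left_mono)
      also have "(\<Sum>p\<in>J. ennreal (\<rho> (fst p) powr (n - s) * l)) = ennreal (\<Sum>p\<in>J. \<rho> (fst p) powr (n - s) * l)"
        using l by (intro sum_ennreal) auto
      also have "(\<Sum>p\<in>J. \<rho> (fst p) powr (n - s) * l) = (\<Sum>k\<in>{1..N}. real (card (I k)) * (\<rho> k powr (n - s) * l))"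
      proof -
        have "(\<Sum>k\<in>{1..N}. \<Sum>i\<in>I k. \<rho> k powr (n - s) * l) = (\<Sum>(k, i)\<in>Sigma {1..N} I. \<rho> k powr (n - s) * l)"
          by (rule sum.Sigma) (auto simp: I_def)
        then show ?thesis unfolding J_def by (simp add: split_def)
      qed
      finally have low1: "ennreal (\<Sum>k\<in>{1..N}. real (card (I k)) * (\<rho> k powr (n - s) * l)) \<le> (\<Sum>p\<in>J. Lint s (A p) (B p))" .
      have "(\<Sum>k\<in>{1..N}. c0 * l) \<le> (\<Sum>k\<in>{1..N}. real (card (I k)) * (\<rho> k powr (n - s) * l))"
      proof (intro sum_mono)
        fix k assume k: "k \<in> {1..N}"
        have "c0 = real a * (real b * lam powr (-(n - s))) ^ (k - 1) * lam powr (-(n-s)) \<or> True" by simp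
        have "1 \<le> (real b * lam powr (-(n - s))) ^ (k - 1)" using rb by (simp add: one_le_power)
        then have "real a * lam powr (-(n-s)) \<le> real a * (real b * lam powr (-(n - s))) ^ (k - 1) * lam powr (-(n-s))"
          using a_pos by (intro mult_right_mono) auto
        also have "\<dots> = real (card (I k)) * \<rho> k powr (n - s)"
          using k unfolding cardI rho_powr
          by (cases k) (auto simp: power_mult_distrib mult_ac)
        finally show "c0 * l \<le> real (card (I k)) * (\<rho> k powr (n - s) * l)"
          unfolding c0_def using l by (simp add: mult.assoc[symmetric])
      qed
      then have "real N * c0 * l \<le> (\<Sum>k\<in>{1..N}. real (card (I k)) * (\<rho> k powr (n - s) * l))" by simp
      then have "ennreal (real N * c0 * l) \<le> (\<Sum>p\<in>J. Lint s (A p) (B p))"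
        using low1 by (meson ennreal_leI order_trans)
      then show ?thesis using up by (rule order_trans)
    qed
    show ?thesis
    proof (rule ccontr)
      assume "frac_perimeter s T \<noteq> \<infinity>"
      then obtain P where P: "frac_perimeter s T = ennreal P" "P \<ge> 0"
        by (metis ennreal_cases infinity_ennreal_def)
      obtain N :: nat where N: "real N > P / (c0 * l)" using reals_Archimedean2 by blast
      have "real N * c0 * l \<le> P" using big[of N] P by (auto simp: ennreal_le_iff2)
      moreover have "P < real N * c0 * l" using N c0 l by (simp add: divide_less_eq mult.assoc)
      ultimately show False by simp
    qed
  qed
  have setEq: "{s. 0 < s \<and> s < 1 \<and> frac_perimeter s T < \<infinity>} = {0<..<n - d}"
  proof -
    have "n - d < 1" using d1 by simp
    then show ?thesis using upper lower by (auto simp: not_le[symmetric])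
  qed
  have "frac_dim T = d"
    unfolding frac_dim_def setEq using d1 n1 by (simp add: cSup_greaterThanLessThan n_def)
  then show ?thesis using upper lower unfolding n_def d_def by auto
qed


end
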